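(* Let $(M_n,S_n)_{n\ge0}$ be a Markov random walk with irreducible positive recurrent driving chain on a countable set $\mathcal S$. If $\liminf_{n\to\infty}S_n$ or $\limsup_{n\to\infty}S_n$ is $\mathbb P_i$-a.s. finite for some $i\in\mathcal S$, then $(M_n,S_n)_{n\ge0}$ is null-homologous.
   Context: $\mathcal S$ is countable and $(M_n)_{n\ge0}$ is an irreducible positive recurrent Markov chain on $\mathcal S$ with stationary distribution $\pi=(\pi_i)_{i\in\mathcal S}$. A Markov random walk (MRW) $(M_n,S_n)_{n\ge0}$ with driving chain $(M_n)$ has $S_0=0$, $S_n=X_1+\dots+X_n$, where conditionally on $(M_n)_{n\ge0}$ the $X_n$ are independent real random variables and, for a stochastic kernel $K$ from $\mathcal S^2$ to $\mathbb R$, $\mathbb P((X_1,\dots,X_n)\in\cdot\mid M_0=i_0,\dots,M_n=i_n)=K_{i_0i_1}\otimes\cdots\otimes K_{i_{n-1}i_n}$ for all $n$ and states. $\mathbb P_i:=\mathbb P(\cdot\mid M_0=i)$, $\mathbb P_\pi:=\sum_i\pi_i\mathbb P_i$. The MRW is null-homologous if there is a function $g:\mathcal S\to\mathbb R$ such that $X_n=g(M_n)-g(M_{n-1})$ $\mathbb P_\pi$-a.s. for all $n\ge1$. *)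

theory Defs
  imports "HOL-Probability.Probability"
begin

definition stochastic_matrix :: "('a \<Rightarrow> 'a \<Rightarrow> real) \<Rightarrow> bool" where
  "stochastic_matrix p \<longleftrightarrow> (\<forall>i j. 0 \<le> p i j) \<and> (\<forall>i. (p i has_sum 1) UNIV)"

fun pstep :: "('a \<Rightarrow> 'a \<Rightarrow> real) \<Rightarrow> nat \<Rightarrow> 'a \<Rightarrow> 'a \<Rightarrow> real" where
  "pstep p 0 i j = (if i = j then 1 else 0)"
| "pstep p (Suc n) i j = (\<Sum>\<^sub>\<infinity>k. pstep p n i k * p k j)"

definition irreducible_matrix :: "('a \<Rightarrow> 'a \<Rightarrow> real) \<Rightarrow> bool" where
  "irreducible_matrix p \<longleftrightarrow> (\<forall>i j. \<exists>n. pstep p n i j > 0)"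

definition stationary_distribution :: "('a \<Rightarrow> 'a \<Rightarrow> real) \<Rightarrow> ('a \<Rightarrow> real) \<Rightarrow> bool" where
  "stationary_distribution p \<pi> \<longleftrightarrow> (\<forall>i. 0 \<le> \<pi> i) \<and> (\<pi> has_sum 1) UNIV \<and>
     (\<forall>j. ((\<lambda>i. \<pi> i * p i j) has_sum \<pi> j) UNIV)"

definition return_time :: "(nat \<Rightarrow> 'b \<Rightarrow> 'a) \<Rightarrow> 'a \<Rightarrow> 'b \<Rightarrow> ennreal" where
  "return_time M i \<omega> = (if \<exists>n>0. M n \<omega> = i
      then ennreal (real (LEAST n. n > 0 \<and> M n \<omega> = i)) else \<infinity>)"

definition psum :: "(nat \<Rightarrow> 'b \<Rightarrow> real) \<Rightarrow> nat \<Rightarrow> 'b \<Rightarrow> real" where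
  "psum X n \<omega> = (\<Sum>k\<in>{1..n}. X k \<omega>)"

text \<open>Markov random walk: Pm i is the law P_i (on a common measurable space), M the driving
  chain with transition matrix p, X the increments (X 0 unused), K the stochastic kernel
  from S^2 to the real line. The defining property fixes all finite-dimensional distributions
  of (M_0,...,M_n,X_1,...,X_n) under P_i.\<close>
definition MRW :: "('a \<Rightarrow> 'a \<Rightarrow> real) \<Rightarrow> ('a \<Rightarrow> 'a \<Rightarrow> real measure)
    \<Rightarrow> (nat \<Rightarrow> 'b \<Rightarrow> 'a) \<Rightarrow> (nat \<Rightarrow> 'b \<Rightarrow> real) \<Rightarrow> ('a \<Rightarrow> 'b measure) \<Rightarrow> bool" where
  "MRW p K M X Pm \<longleftrightarrow>
     stochastic_matrix p \<and>
     (\<forall>i j. prob_space (K i j) \<and> sets (K i j) = sets borel) \<and>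
     (\<forall>i. prob_space (Pm i)) \<and>
     (\<forall>i j. sets (Pm i) = sets (Pm j)) \<and>
     (\<forall>i n. M n \<in> measurable (Pm i) (count_space UNIV)) \<and>
     (\<forall>i n. X n \<in> borel_measurable (Pm i)) \<and>
     (\<forall>i n (is :: nat \<Rightarrow> 'a) (B :: nat \<Rightarrow> real set). (\<forall>k. B k \<in> sets borel) \<longrightarrow>
        measure (Pm i) {\<omega> \<in> space (Pm i). (\<forall>k\<le>n. M k \<omega> = is k) \<and> (\<forall>k\<in>{1..n}. X k \<omega> \<in> B k)}
        = (if is 0 = i then 1 else 0) *
          (\<Prod>k\<in>{1..n}. p (is (k - 1)) (is k) * measure (K (is (k - 1)) (is k)) (B k)))"

definition positive_recurrent :: "(nat \<Rightarrow> 'b \<Rightarrow> 'a) \<Rightarrow> ('a \<Rightarrow> 'b measure) \<Rightarrow> bool" where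
  "positive_recurrent M Pm \<longleftrightarrow> (\<forall>i. (\<integral>\<^sup>+ \<omega>. return_time M i \<omega> \<partial>Pm i) < \<infinity>)"

definition Ppi :: "('a \<Rightarrow> real) \<Rightarrow> ('a \<Rightarrow> 'b measure) \<Rightarrow> 'b measure" where
  "Ppi \<pi> Pm = measure_of (space (Pm undefined)) (sets (Pm undefined))
      (\<lambda>A. \<integral>\<^sup>+ i. ennreal (\<pi> i) * emeasure (Pm i) A \<partial>count_space UNIV)"

definition null_homologous :: "('a \<Rightarrow> real) \<Rightarrow> ('a \<Rightarrow> 'b measure)
    \<Rightarrow> (nat \<Rightarrow> 'b \<Rightarrow> 'a) \<Rightarrow> (nat \<Rightarrow> 'b \<Rightarrow> real) \<Rightarrow> bool" where
  "null_homologous \<pi> Pm M X \<longleftrightarrow> (\<exists>g :: 'a \<Rightarrow> real. \<forall>n\<ge>1.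
      AE \<omega> in Ppi \<pi> Pm. X n \<omega> = g (M n \<omega>) - g (M (n - 1) \<omega>))"

end

theory Submission
  imports Defs
begin


definition cylS :: "nat \<Rightarrow> (nat \<Rightarrow> 'a) \<Rightarrow> (nat \<Rightarrow> real set) \<Rightarrow> (nat \<Rightarrow> 'a \<times> real) set" where
  "cylS n is B = {s. (\<forall>k\<le>n. fst (s k) = is k) \<and> (\<forall>k\<in>{1..n}. snd (s k) \<in> B k)}"

definition GS :: "(nat \<Rightarrow> 'a \<times> real) set set" where
  "GS = {cylS n is B | n is B. \<forall>k. B k \<in> sets borel}"

definition SS :: "(nat \<Rightarrow> 'a \<times> real) measure" where
  "SS = sigma UNIV GS"

lemma space_SS[simp]: "space SS = UNIV"
  unfolding SS_def by simp

lemma sets_SS: "sets SS = sigma_sets UNIV GS"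
  unfolding SS_def by simp

lemma GS_in_SS: "\<forall>k. B k \<in> sets borel \<Longrightarrow> cylS n is B \<in> sets SS"
  unfolding sets_SS GS_def by (rule sigma_sets.Basic) blast

lemma Int_stable_GS: "Int_stable (GS :: (nat \<Rightarrow> 'a \<times> real) set set)"
proof (rule Int_stableI)
  fix a b :: "(nat \<Rightarrow> 'a \<times> real) set" assume "a \<in> GS" "b \<in> GS"
  then obtain n1 is1 B1 n2 is2 B2 where a: "a = cylS n1 is1 B1" "\<forall>k. B1 k \<in> sets borel"
    and b: "b = cylS n2 is2 B2" "\<forall>k. B2 k \<in> sets borel"
    unfolding GS_def by blast
  show "a \<inter> b \<in> GS"
  proof (cases "\<forall>k\<le>min n1 n2. is1 k = is2 k")
    case False
    then obtain k0 where k0: "k0 \<le> min n1 n2" "is1 k0 \<noteq> is2 k0" by auto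
    have "a \<inter> b = cylS 1 is1 (\<lambda>_. {})"
      using k0 unfolding a b cylS_def by (auto simp: set_eq_iff)
    then show ?thesis unfolding GS_def by auto
  next
    case True
    define is3 where "is3 = (\<lambda>k. if k \<le> n1 then is1 k else is2 k)"
    define B3 where "B3 = (\<lambda>k. (if k \<le> n1 then B1 k else UNIV) \<inter> (if k \<le> n2 then B2 k else UNIV))"
    have "a \<inter> b = cylS (max n1 n2) is3 B3"
    proof (intro equalityI subsetI)
      fix x assume "x \<in> a \<inter> b"
      then have x1: "\<forall>k\<le>n1. fst (x k) = is1 k" "\<forall>k\<in>{1..n1}. snd (x k) \<in> B1 k"
        and x2: "\<forall>k\<le>n2. fst (x k) = is2 k" "\<forall>k\<in>{1..n2}. snd (x k) \<in> B2 k"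
        unfolding a b cylS_def by auto
      have "\<forall>k\<le>max n1 n2. fst (x k) = is3 k"
      proof (intro allI impI)
        fix k assume "k \<le> max n1 n2"
        then show "fst (x k) = is3 k" using x1 x2 unfolding is3_def by (cases "k \<le> n1") auto
      qed
      moreover have "\<forall>k\<in>{1..max n1 n2}. snd (x k) \<in> B3 k"
        using x1 x2 unfolding B3_def by auto
      ultimately show "x \<in> cylS (max n1 n2) is3 B3" unfolding cylS_def by blast
    next
      fix x assume "x \<in> cylS (max n1 n2) is3 B3"
      then have x3: "\<forall>k\<le>max n1 n2. fst (x k) = is3 k" "\<forall>k\<in>{1..max n1 n2}. snd (x k) \<in> B3 k"
        unfolding cylS_def by auto
      have "\<forall>k\<le>n1. fst (x k) = is1 k" using x3(1) unfolding is3_def by auto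
      moreover have "\<forall>k\<le>n2. fst (x k) = is2 k"
      proof (intro allI impI)
        fix k assume k: "k \<le> n2"
        then have "fst (x k) = is3 k" using x3(1) by auto
        then show "fst (x k) = is2 k" using True k unfolding is3_def by (cases "k \<le> n1") auto
      qed
      moreover have "\<forall>k\<in>{1..n1}. snd (x k) \<in> B1 k"
      proof
        fix k assume k: "k \<in> {1..n1}"
        then have "snd (x k) \<in> B3 k" using x3(2) by auto
        then show "snd (x k) \<in> B1 k" using k unfolding B3_def by auto
      qed
      moreover have "\<forall>k\<in>{1..n2}. snd (x k) \<in> B2 k"
      proof
        fix k assume k: "k \<in> {1..n2}"
        then have "snd (x k) \<in> B3 k" using x3(2) by auto
        then show "snd (x k) \<in> B2 k" using k unfolding B3_def by auto
      qed
      ultimately show "x \<in> a \<inter> b" unfolding a b cylS_def by blast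
    qed
    moreover have "\<forall>k. B3 k \<in> sets borel" using a b unfolding B3_def by auto
    ultimately show ?thesis unfolding GS_def by blast
  qed
qed

locale MRWloc =
  fixes p :: "'a::countable \<Rightarrow> 'a \<Rightarrow> real" and K :: "'a \<Rightarrow> 'a \<Rightarrow> real measure"
    and M :: "nat \<Rightarrow> 'b \<Rightarrow> 'a" and X :: "nat \<Rightarrow> 'b \<Rightarrow> real" and Pm :: "'a \<Rightarrow> 'b measure"
  assumes mrw: "MRW p K M X Pm"
begin

lemma prob: "prob_space (Pm i)"
  using mrw unfolding MRW_def by auto

lemma sets_eq: "sets (Pm i) = sets (Pm j)"
  using mrw unfolding MRW_def by auto

lemma space_eq: "space (Pm i) = space (Pm j)"
  using sets_eq by (rule sets_eq_imp_space_eq)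

lemma M_meas[measurable]: "M n \<in> measurable (Pm i) (count_space UNIV)"
  using mrw unfolding MRW_def by auto

lemma X_meas[measurable]: "X n \<in> borel_measurable (Pm i)"
  using mrw unfolding MRW_def by auto

lemma p_nonneg: "0 \<le> p i j"
  using mrw unfolding MRW_def stochastic_matrix_def by auto

lemma p_sum: "(p i has_sum 1) UNIV"
  using mrw unfolding MRW_def stochastic_matrix_def by auto

lemma K_prob: "prob_space (K i j)"
  using mrw unfolding MRW_def by auto

lemma K_sets: "sets (K i j) = sets borel"
  using mrw unfolding MRW_def by auto

lemma K_space[simp]: "space (K i j) = UNIV"
  using sets_eq_imp_space_eq[OF K_sets[of i j]] by simp

lemma K_UNIV[simp]: "measure (K i j) UNIV = 1"
  using prob_space.prob_space[OF K_prob[of i j]] by simp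

lemma cyl_sets:
  assumes "\<And>k. B k \<in> sets borel"
  shows "{\<omega> \<in> space (Pm i). (\<forall>k\<le>n. M k \<omega> = is k) \<and> (\<forall>k\<in>{1..n}. X k \<omega> \<in> B k)} \<in> sets (Pm i)"
proof -
  have [measurable]: "\<And>k. B k \<in> sets borel" by fact
  show ?thesis by measurable
qed

lemma cyl_measure:
  assumes "\<And>k. B k \<in> sets borel"
  shows "measure (Pm i) {\<omega> \<in> space (Pm i). (\<forall>k\<le>n. M k \<omega> = is k) \<and> (\<forall>k\<in>{1..n}. X k \<omega> \<in> B k)}
        = (if is 0 = i then 1 else 0) *
          (\<Prod>k\<in>{1..n}. p (is (k - 1)) (is k) * measure (K (is (k - 1)) (is k)) (B k))"
  using mrw assms unfolding MRW_def by blast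

lemma M0_AE: "AE \<omega> in Pm i. M 0 \<omega> = i"
proof -
  interpret prob_space "Pm i" by (rule prob)
  have "measure (Pm i) {\<omega> \<in> space (Pm i). (\<forall>k\<le>0. M k \<omega> = (\<lambda>_. i) k) \<and> (\<forall>k\<in>{1..0::nat}. X k \<omega> \<in> UNIV)} = 1"
    using cyl_measure[of "\<lambda>_. UNIV" i 0 "\<lambda>_. i"] by simp
  hence "prob {\<omega> \<in> space (Pm i). M 0 \<omega> = i} = 1" by simp
  from AE_prob_1[OF this] show ?thesis by eventually_elim auto
qed


lemma all_le_Suc_conv: "(\<forall>m\<le>Suc n. P m) \<longleftrightarrow> P 0 \<and> (\<forall>m\<le>n. P (Suc m))"
  by (metis Suc_le_mono le0 not0_implies_Suc)

lemma all_1_Suc_conv: "(\<forall>m\<in>{1..Suc n}. P m) \<longleftrightarrow> P 1 \<and> (\<forall>m\<in>{1..n}. P (Suc m))"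
proof -
  have "{1..Suc n} = insert 1 (Suc ` {1..n})"
  proof (intro equalityI subsetI)
    fix x assume "x \<in> {1..Suc n}"
    then show "x \<in> insert 1 (Suc ` {1..n})"
      by (cases x) (auto simp: image_iff)
  qed auto
  then show ?thesis unfolding \<open>{1..Suc n} = _\<close> by blast
qed

lemma shift_cyl:
  assumes A: "A \<in> sets borel" and B: "\<And>m. B m \<in> sets borel"
  shows "emeasure (Pm j) {\<omega>\<in>space (Pm j). M 1 \<omega> = k \<and> X 1 \<omega> \<in> A \<and>
           (\<forall>m\<le>n. M (Suc m) \<omega> = is m) \<and> (\<forall>m\<in>{1..n}. X (Suc m) \<omega> \<in> B m)}
       = ennreal (p j k * measure (K j k) A) *
         emeasure (Pm k) {\<omega>\<in>space (Pm k). (\<forall>m\<le>n. M m \<omega> = is m) \<and> (\<forall>m\<in>{1..n}. X m \<omega> \<in> B m)}"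
proof -
  interpret Pj: prob_space "Pm j" by (rule prob)
  interpret Pk: prob_space "Pm k" by (rule prob)
  have Kpos: "0 \<le> measure (K a b) C" for a b C by simp
  have pnn: "0 \<le> p a b" for a b by (rule p_nonneg)
  define PR where "PR = (\<Prod>m\<in>{1..n}. p (is (m - 1)) (is m) * measure (K (is (m - 1)) (is m)) (B m))"
  have PRnn: "0 \<le> PR" unfolding PR_def by (intro prod_nonneg) (auto intro: mult_nonneg_nonneg pnn)
  have rhs: "emeasure (Pm k) {\<omega>\<in>space (Pm k). (\<forall>m\<le>n. M m \<omega> = is m) \<and> (\<forall>m\<in>{1..n}. X m \<omega> \<in> B m)}
     = ennreal ((if is 0 = k then 1 else 0) * PR)"
    unfolding PR_def
    by (subst Pk.emeasure_eq_measure, subst cyl_measure[OF B]) simp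
  show ?thesis
  proof (cases "is 0 = k")
    case False
    then have emp: "{\<omega>\<in>space (Pm j). M 1 \<omega> = k \<and> X 1 \<omega> \<in> A \<and>
           (\<forall>m\<le>n. M (Suc m) \<omega> = is m) \<and> (\<forall>m\<in>{1..n}. X (Suc m) \<omega> \<in> B m)} = {}"
      using False by (auto dest!: spec[where x=0])
    show ?thesis using False rhs by (simp only: emp) simp
  next
    case True
    define is' where "is' = (\<lambda>m. case m of 0 \<Rightarrow> j | Suc m' \<Rightarrow> is m')"
    define B' where "B' = (\<lambda>m. if m = 1 then A else B (m - 1))"
    have B': "\<And>m. B' m \<in> sets borel" unfolding B'_def using A B by auto
    let ?L = "{\<omega>\<in>space (Pm j). M 1 \<omega> = k \<and> X 1 \<omega> \<in> A \<and>
           (\<forall>m\<le>n. M (Suc m) \<omega> = is m) \<and> (\<forall>m\<in>{1..n}. X (Suc m) \<omega> \<in> B m)}"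
    let ?E = "{\<omega> \<in> space (Pm j). (\<forall>m\<le>Suc n. M m \<omega> = is' m) \<and> (\<forall>m\<in>{1..Suc n}. X m \<omega> \<in> B' m)}"
    have Lsets: "?L \<in> sets (Pm j)"
    proof -
      have [measurable]: "A \<in> sets borel" "\<And>m. B m \<in> sets borel" by (fact A, fact B)
      show ?thesis by measurable
    qed
    have "AE \<omega> in Pm j. \<omega> \<in> ?L \<longleftrightarrow> \<omega> \<in> ?E"
      using M0_AE[of j]
    proof eventually_elim
      case (elim \<omega>)
      have "(\<forall>m\<le>Suc n. M m \<omega> = is' m) \<longleftrightarrow> M 0 \<omega> = j \<and> (\<forall>m\<le>n. M (Suc m) \<omega> = is m)"
        unfolding all_le_Suc_conv is'_def by simp
      moreover have "(\<forall>m\<in>{1..Suc n}. X m \<omega> \<in> B' m) \<longleftrightarrow> X 1 \<omega> \<in> A \<and> (\<forall>m\<in>{1..n}. X (Suc m) \<omega> \<in> B m)"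
        unfolding all_1_Suc_conv B'_def by simp
      ultimately show ?case using elim True by auto
    qed
    then have "emeasure (Pm j) ?L = emeasure (Pm j) ?E"
      by (intro emeasure_eq_AE Lsets cyl_sets B')
    also have "\<dots> = ennreal (measure (Pm j) ?E)"
      by (simp add: Pj.emeasure_eq_measure)
    also have "measure (Pm j) ?E = (\<Prod>m\<in>{1..Suc n}. p (is' (m - 1)) (is' m) * measure (K (is' (m - 1)) (is' m)) (B' m))"
      by (subst cyl_measure[OF B']) (simp add: is'_def)
    also have "\<dots> = (p j k * measure (K j k) A) * PR"
      unfolding PR_def
      by (subst prod.atLeast_Suc_atMost, simp, subst prod.shift_bounds_cl_Suc_ivl)
        (simp add: is'_def B'_def True, intro disjI2 prod.cong refl, auto split: nat.split)
    also have "ennreal (p j k * measure (K j k) A * PR) = ennreal (p j k * measure (K j k) A) * ennreal PR"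
      by (rule ennreal_mult) (auto simp: p_nonneg PRnn)
    finally show ?thesis unfolding rhs using True by simp
  qed
qed


lemma W_meas: "(\<lambda>\<omega> n. (M (n + d) \<omega>, X (n + d) \<omega>)) \<in> measurable (Pm i) SS"
  unfolding SS_def
proof (rule measurable_measure_of)
  show "GS \<subseteq> Pow UNIV" by simp
  show "(\<lambda>\<omega> n. (M (n + d) \<omega>, X (n + d) \<omega>)) \<in> space (Pm i) \<rightarrow> UNIV" by simp
  fix C :: "(nat \<Rightarrow> 'a \<times> real) set" assume "C \<in> GS"
  then obtain n "is" B where C: "C = cylS n is B" and B: "\<forall>k. B k \<in> sets borel"
    unfolding GS_def by blast
  have [measurable]: "\<And>k. B k \<in> sets borel" using B by auto
  have "(\<lambda>\<omega> n. (M (n + d) \<omega>, X (n + d) \<omega>)) -` C \<inter> space (Pm i)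
    = {\<omega> \<in> space (Pm i). (\<forall>k\<le>n. M (k + d) \<omega> = is k) \<and> (\<forall>k\<in>{1..n}. X (k + d) \<omega> \<in> B k)}"
    unfolding C cylS_def by auto
  also have "\<dots> \<in> sets (Pm i)" by measurable
  finally show "(\<lambda>\<omega> n. (M (n + d) \<omega>, X (n + d) \<omega>)) -` C \<inter> space (Pm i) \<in> sets (Pm i)" .
qed

end

lemma snd_meas: "1 \<le> m \<Longrightarrow> (\<lambda>s. snd (s m)) \<in> borel_measurable (SS :: (nat \<Rightarrow> 'a::countable \<times> real) measure)"
proof (rule borel_measurableI)
  fix S :: "real set" assume "open S" "1 \<le> m"
  then have S: "S \<in> sets borel" by auto
  have "(\<lambda>s::nat \<Rightarrow> 'a \<times> real. snd (s m)) -` S \<inter> space SS =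
     (\<Union>l\<in>{l::'a list. length l = Suc m}. cylS m (\<lambda>k. l ! k) (\<lambda>k. if k = m then S else UNIV))"
  proof (intro equalityI subsetI)
    fix s :: "nat \<Rightarrow> 'a \<times> real" assume "s \<in> (\<lambda>s. snd (s m)) -` S \<inter> space SS"
    then show "s \<in> (\<Union>l\<in>{l::'a list. length l = Suc m}. cylS m (\<lambda>k. l ! k) (\<lambda>k. if k = m then S else UNIV))"
      using \<open>1 \<le> m\<close> by (intro UN_I[of "map (\<lambda>k. fst (s k)) [0..<Suc m]"]) (auto simp: cylS_def nth_map simp del: upt_Suc)
  next
    fix s :: "nat \<Rightarrow> 'a \<times> real"
    assume "s \<in> (\<Union>l\<in>{l::'a list. length l = Suc m}. cylS m (\<lambda>k. l ! k) (\<lambda>k. if k = m then S else UNIV))"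
    then have "\<forall>k\<in>{1..m}. snd (s k) \<in> (if k = m then S else UNIV)" unfolding cylS_def by blast
    then have "snd (s m) \<in> S" using \<open>1 \<le> m\<close> by (metis atLeastAtMost_iff order_refl)
    then show "s \<in> (\<lambda>s. snd (s m)) -` S \<inter> space SS" by simp
  qed
  also have "\<dots> \<in> sets SS"
    by (intro sets.countable_UN'' GS_in_SS) (auto simp: S intro: countableI_type)
  finally show "(\<lambda>s::nat \<Rightarrow> 'a \<times> real. snd (s m)) -` S \<inter> space SS \<in> sets SS" .
qed




definition WW :: "(nat \<Rightarrow> 'b \<Rightarrow> 'a) \<Rightarrow> (nat \<Rightarrow> 'b \<Rightarrow> real) \<Rightarrow> nat \<Rightarrow> 'b \<Rightarrow> nat \<Rightarrow> 'a \<times> real" where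
  "WW M X d \<omega> = (\<lambda>n. (M (n + d) \<omega>, X (n + d) \<omega>))"

context MRWloc
begin

lemma WW_meas[measurable]: "WW M X d \<in> measurable (Pm i) SS"
  unfolding WW_def by (rule W_meas)

lemma shift_law:
  assumes A[measurable]: "A \<in> sets borel" and C[measurable]: "C \<in> sets SS"
  shows "emeasure (Pm j) {\<omega>\<in>space (Pm j). M 1 \<omega> = k \<and> X 1 \<omega> \<in> A \<and> WW M X 1 \<omega> \<in> C}
    = ennreal (p j k * measure (K j k) A) * emeasure (Pm k) {\<omega>\<in>space (Pm k). WW M X 0 \<omega> \<in> C}"
proof -
  interpret Pj: prob_space "Pm j" by (rule prob)
  interpret Pk: prob_space "Pm k" by (rule prob)
  define E where "E = {\<omega>\<in>space (Pm j). M 1 \<omega> = k \<and> X 1 \<omega> \<in> A}"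
  have E[measurable]: "E \<in> sets (Pm j)" unfolding E_def by measurable
  define c where "c = ennreal (p j k * measure (K j k) A)"
  define N1 where "N1 = distr (density (Pm j) (indicator E)) SS (WW M X 1)"
  define N2 where "N2 = density (distr (Pm k) SS (WW M X 0)) (\<lambda>_. c)"
  have N1: "emeasure N1 C' = emeasure (Pm j) {\<omega>\<in>space (Pm j). M 1 \<omega> = k \<and> X 1 \<omega> \<in> A \<and> WW M X 1 \<omega> \<in> C'}"
    if [measurable]: "C' \<in> sets SS" for C'
  proof -
    have "emeasure N1 C' = emeasure (density (Pm j) (indicator E)) (WW M X 1 -` C' \<inter> space (Pm j))"
      unfolding N1_def by (subst emeasure_distr) auto
    also have "\<dots> = emeasure (Pm j) (E \<inter> (WW M X 1 -` C' \<inter> space (Pm j)))"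
    proof -
      have S: "WW M X 1 -` C' \<inter> space (Pm j) \<in> sets (Pm j)" by measurable
      have "emeasure (density (Pm j) (indicator E)) (WW M X 1 -` C' \<inter> space (Pm j))
          = (\<integral>\<^sup>+ x. indicator E x * indicator (WW M X 1 -` C' \<inter> space (Pm j)) x \<partial>Pm j)"
        by (rule emeasure_density[OF _ S]) simp
      also have "\<dots> = (\<integral>\<^sup>+ x. indicator (E \<inter> (WW M X 1 -` C' \<inter> space (Pm j))) x \<partial>Pm j)"
        by (simp add: indicator_inter_arith)
      also have "\<dots> = emeasure (Pm j) (E \<inter> (WW M X 1 -` C' \<inter> space (Pm j)))"
        using S E by (intro nn_integral_indicator) blast
      finally show ?thesis .
    qed
    also have "E \<inter> (WW M X 1 -` C' \<inter> space (Pm j)) = {\<omega>\<in>space (Pm j). M 1 \<omega> = k \<and> X 1 \<omega> \<in> A \<and> WW M X 1 \<omega> \<in> C'}"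
      unfolding E_def by auto
    finally show ?thesis .
  qed
  have N2: "emeasure N2 C' = c * emeasure (Pm k) {\<omega>\<in>space (Pm k). WW M X 0 \<omega> \<in> C'}"
    if [measurable]: "C' \<in> sets SS" for C'
  proof -
    have "emeasure N2 C' = c * emeasure (distr (Pm k) SS (WW M X 0)) C'"
      unfolding N2_def
    proof -
      have S: "C' \<in> sets (distr (Pm k) SS (WW M X 0))" by simp
      show "emeasure (density (distr (Pm k) SS (WW M X 0)) (\<lambda>_. c)) C' = c * emeasure (distr (Pm k) SS (WW M X 0)) C'"
        by (subst emeasure_density[OF _ S]) (simp_all add: nn_integral_cmult_indicator[OF S])
    qed
    also have "emeasure (distr (Pm k) SS (WW M X 0)) C' = emeasure (Pm k) {\<omega>\<in>space (Pm k). WW M X 0 \<omega> \<in> C'}"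
      by (subst emeasure_distr[OF WW_meas that]) (simp add: vimage_def Int_def conj_commute)
    finally show ?thesis .
  qed
  have "N1 = N2"
  proof (rule measure_eqI_generator_eq[OF Int_stable_GS, where \<Omega>=UNIV and A="\<lambda>i. cylS 0 (\<lambda>_. from_nat i) (\<lambda>_. UNIV)"])
    show "GS \<subseteq> Pow UNIV" by simp
    show "sets N1 = sigma_sets UNIV GS" unfolding N1_def by (simp add: sets_SS)
    show "sets N2 = sigma_sets UNIV GS" unfolding N2_def by (simp add: sets_SS)
    show "range (\<lambda>i. cylS 0 (\<lambda>_. from_nat i) (\<lambda>_. UNIV)) \<subseteq> GS" unfolding GS_def by (intro subsetI) (auto intro!: exI[where x=0] exI[where x="\<lambda>_. UNIV"])
    show "(\<Union>i. cylS 0 (\<lambda>_. from_nat i :: 'a) (\<lambda>_. UNIV)) = UNIV"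
    proof (intro equalityI subsetI)
      fix s :: "nat \<Rightarrow> 'a \<times> real"
      show "s \<in> (\<Union>i. cylS 0 (\<lambda>_. from_nat i :: 'a) (\<lambda>_. UNIV))"
        unfolding cylS_def by (intro UN_I[of "to_nat (fst (s 0))"]) auto
    qed simp
    show "emeasure N1 (cylS 0 (\<lambda>_. from_nat i) (\<lambda>_. UNIV)) \<noteq> \<infinity>" for i
      by (subst N1[OF GS_in_SS]) (auto simp: Pj.emeasure_eq_measure)
    fix C' :: "(nat \<Rightarrow> 'a \<times> real) set" assume "C' \<in> GS"
    then obtain n "is" B where C': "C' = cylS n is B" and B: "\<forall>k. B k \<in> sets borel"
      unfolding GS_def by blast
    have C'S: "C' \<in> sets SS" using C' B by (simp add: GS_in_SS)
    show "emeasure N1 C' = emeasure N2 C'"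
    proof -
      have e1: "{\<omega>\<in>space (Pm j). M 1 \<omega> = k \<and> X 1 \<omega> \<in> A \<and> WW M X 1 \<omega> \<in> C'} =
         {\<omega>\<in>space (Pm j). M 1 \<omega> = k \<and> X 1 \<omega> \<in> A \<and>
           (\<forall>m\<le>n. M (Suc m) \<omega> = is m) \<and> (\<forall>m\<in>{1..n}. X (Suc m) \<omega> \<in> B m)}"
        unfolding C' cylS_def WW_def by simp
      have e2: "{\<omega>\<in>space (Pm k). WW M X 0 \<omega> \<in> C'} =
         {\<omega>\<in>space (Pm k). (\<forall>m\<le>n. M m \<omega> = is m) \<and> (\<forall>m\<in>{1..n}. X m \<omega> \<in> B m)}"
        unfolding C' cylS_def WW_def by simp
      show ?thesis
        unfolding N1[OF C'S] N2[OF C'S] e1 e2 c_def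
        using shift_cyl[OF A, of B j k n "is"] B by simp
    qed
  qed
  then show ?thesis using N1[OF C] N2[OF C] unfolding c_def by simp
qed

lemma pair_law:
  "density (K j k) (\<lambda>_. ennreal (p j k)) \<Otimes>\<^sub>M distr (Pm k) SS (WW M X 0)
   = distr (density (Pm j) (\<lambda>\<omega>. ennreal (indicator {\<omega>\<in>space (Pm j). M 1 \<omega> = k} \<omega>)))
       (borel \<Otimes>\<^sub>M SS) (\<lambda>\<omega>. (X 1 \<omega>, WW M X 1 \<omega>))" (is "?M1 \<Otimes>\<^sub>M ?M2 = ?N")
proof (rule pair_measure_eqI)
  interpret Pj: prob_space "Pm j" by (rule prob)
  interpret Pk: prob_space "Pm k" by (rule prob)
  interpret Kp: prob_space "K j k" by (rule K_prob)
  define E where "E = {\<omega>\<in>space (Pm j). M 1 \<omega> = k}"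
  have E[measurable]: "E \<in> sets (Pm j)" unfolding E_def by measurable
  have M1A: "emeasure ?M1 A = ennreal (p j k * measure (K j k) A)" if "A \<in> sets ?M1" for A
  proof -
    have A: "A \<in> sets (K j k)" using that by simp
    show ?thesis
      by (subst emeasure_density[OF _ A]) (simp_all add: nn_integral_cmult_indicator[OF A] sets.top[of borel, simplified]
          Kp.emeasure_eq_measure ennreal_mult p_nonneg)
  qed
  show "sigma_finite_measure ?M1"
  proof -
    have "finite_measure ?M1" by (rule finite_measureI) (subst M1A, simp_all add: K_sets)
    then show ?thesis by (rule finite_measure.sigma_finite_measure)
  qed
  show "sigma_finite_measure ?M2"
    by (rule finite_measure.sigma_finite_measure, rule prob_space.finite_measure, rule Pk.prob_space_distr) simp
  show "sets (?M1 \<Otimes>\<^sub>M ?M2) = sets ?N"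
    by (simp add: K_sets cong: sets_pair_measure_cong)
  fix A B assume A: "A \<in> sets ?M1" and B: "B \<in> sets ?M2"
  have A'[measurable]: "A \<in> sets borel" using A by (simp add: K_sets)
  have B'[measurable]: "B \<in> sets SS" using B by simp
  have "emeasure ?N (A \<times> B) = emeasure (density (Pm j) (\<lambda>\<omega>. ennreal (indicator E \<omega>)))
      ((\<lambda>\<omega>. (X 1 \<omega>, WW M X 1 \<omega>)) -` (A \<times> B) \<inter> space (Pm j))"
    unfolding E_def by (subst emeasure_distr) auto
  also have "\<dots> = emeasure (Pm j) {\<omega>\<in>space (Pm j). M 1 \<omega> = k \<and> X 1 \<omega> \<in> A \<and> WW M X 1 \<omega> \<in> B}"
  proof -
    have S: "(\<lambda>\<omega>. (X 1 \<omega>, WW M X 1 \<omega>)) -` (A \<times> B) \<inter> space (Pm j) \<in> sets (Pm j)" by measurable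
    have "emeasure (density (Pm j) (\<lambda>\<omega>. ennreal (indicator E \<omega>))) ((\<lambda>\<omega>. (X 1 \<omega>, WW M X 1 \<omega>)) -` (A \<times> B) \<inter> space (Pm j))
      = (\<integral>\<^sup>+ x. ennreal (indicator E x) * indicator ((\<lambda>\<omega>. (X 1 \<omega>, WW M X 1 \<omega>)) -` (A \<times> B) \<inter> space (Pm j)) x \<partial>Pm j)"
      by (rule emeasure_density[OF _ S]) simp
    also have "\<dots> = (\<integral>\<^sup>+ x. indicator (E \<inter> ((\<lambda>\<omega>. (X 1 \<omega>, WW M X 1 \<omega>)) -` (A \<times> B) \<inter> space (Pm j))) x \<partial>Pm j)"
      by (simp add: indicator_inter_arith ennreal_indicator)
    also have "\<dots> = emeasure (Pm j) (E \<inter> ((\<lambda>\<omega>. (X 1 \<omega>, WW M X 1 \<omega>)) -` (A \<times> B) \<inter> space (Pm j)))"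
      using S E by (intro nn_integral_indicator) blast
    also have "E \<inter> ((\<lambda>\<omega>. (X 1 \<omega>, WW M X 1 \<omega>)) -` (A \<times> B) \<inter> space (Pm j))
       = {\<omega>\<in>space (Pm j). M 1 \<omega> = k \<and> X 1 \<omega> \<in> A \<and> WW M X 1 \<omega> \<in> B}"
      unfolding E_def by auto
    finally show ?thesis .
  qed
  also have "\<dots> = ennreal (p j k * measure (K j k) A) * emeasure (Pm k) {\<omega>\<in>space (Pm k). WW M X 0 \<omega> \<in> B}"
    by (rule shift_law[OF A' B'])
  also have "emeasure (Pm k) {\<omega>\<in>space (Pm k). WW M X 0 \<omega> \<in> B} = emeasure ?M2 B"
    by (subst emeasure_distr[OF WW_meas B']) (simp add: vimage_def Int_def conj_commute)
  finally show "emeasure ?M1 A * emeasure ?M2 B = emeasure ?N (A \<times> B)"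
    using M1A[OF A] by simp
qed

lemma factor_integral:
  fixes f :: "real \<Rightarrow> complex" and F :: "(nat \<Rightarrow> 'a \<times> real) \<Rightarrow> complex"
  assumes f[measurable]: "f \<in> borel_measurable borel" and F[measurable]: "F \<in> borel_measurable SS"
    and fb: "\<And>x. norm (f x) \<le> 1" and Fb: "\<And>s. norm (F s) \<le> 1"
  shows "(\<integral>\<omega>. indicator {\<omega>\<in>space (Pm j). M 1 \<omega> = k} \<omega> *\<^sub>R (f (X 1 \<omega>) * F (WW M X 1 \<omega>)) \<partial>Pm j)
       = p j k * (\<integral>x. f x \<partial>K j k) * (\<integral>\<omega>. F (WW M X 0 \<omega>) \<partial>Pm k)"
proof -
  interpret Pj: prob_space "Pm j" by (rule prob)
  interpret Pk: prob_space "Pm k" by (rule prob)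
  interpret Kp: prob_space "K j k" by (rule K_prob)
  define M1 where "M1 = density (K j k) (\<lambda>_. ennreal (p j k))"
  define M2 where "M2 = distr (Pm k) SS (WW M X 0)"
  define E where "E = {\<omega>\<in>space (Pm j). M 1 \<omega> = k}"
  have E[measurable]: "E \<in> sets (Pm j)" unfolding E_def by measurable
  have sK[simp, measurable_cong]: "sets (K j k) = sets borel" by (rule K_sets)
  have spK[simp]: "space (K j k) = UNIV" using sets_eq_imp_space_eq[OF sK] by simp
  have fK: "f \<in> borel_measurable (K j k)" using f by (simp add: measurable_cong_sets[OF sK refl])
  have sM1[simp, measurable_cong]: "sets M1 = sets borel" unfolding M1_def by (simp add: K_sets)
  have sM2[simp, measurable_cong]: "sets M2 = sets SS" unfolding M2_def by simp
  have fin1: "finite_measure M1"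
  proof (rule finite_measureI)
    have "emeasure M1 (space M1) = ennreal (p j k) * emeasure (K j k) (space (K j k))"
      unfolding M1_def by (subst emeasure_density) (simp_all add: nn_integral_cmult_indicator)
    then show "emeasure M1 (space M1) \<noteq> \<infinity>" by (simp add: ennreal_mult_eq_top_iff)
  qed
  have fin2: "finite_measure M2" unfolding M2_def
    by (rule prob_space.finite_measure, rule Pk.prob_space_distr) simp
  interpret M1: finite_measure M1 by (rule fin1)
  interpret M2: finite_measure M2 by (rule fin2)
  interpret P12: pair_sigma_finite M1 M2 ..
  interpret P12f: finite_measure "M1 \<Otimes>\<^sub>M M2" by (rule finite_measure_pair_measure) fact+
  define H where "H = (\<lambda>z :: real \<times> (nat \<Rightarrow> 'a \<times> real). f (fst z) * F (snd z))"
  have H[measurable]: "H \<in> borel_measurable (borel \<Otimes>\<^sub>M SS)" unfolding H_def by measurable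
  have Hb: "norm (H z) \<le> 1" for z unfolding H_def norm_mult
    using fb[of "fst z"] Fb[of "snd z"] by (simp add: mult_le_one)
  have "(\<integral>\<omega>. indicator E \<omega> *\<^sub>R (f (X 1 \<omega>) * F (WW M X 1 \<omega>)) \<partial>Pm j)
      = (\<integral>\<omega>. H (X 1 \<omega>, WW M X 1 \<omega>) \<partial>density (Pm j) (\<lambda>\<omega>. ennreal (indicator E \<omega>)))"
    by (subst integral_density) (auto simp: H_def)
  also have "\<dots> = (\<integral>z. H z \<partial>distr (density (Pm j) (\<lambda>\<omega>. ennreal (indicator E \<omega>))) (borel \<Otimes>\<^sub>M SS) (\<lambda>\<omega>. (X 1 \<omega>, WW M X 1 \<omega>)))"
    by (subst integral_distr) auto
  also have "distr (density (Pm j) (\<lambda>\<omega>. ennreal (indicator E \<omega>))) (borel \<Otimes>\<^sub>M SS) (\<lambda>\<omega>. (X 1 \<omega>, WW M X 1 \<omega>))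
     = M1 \<Otimes>\<^sub>M M2"
    unfolding M1_def M2_def E_def by (rule pair_law[symmetric])
  also have "(\<integral>z. H z \<partial>(M1 \<Otimes>\<^sub>M M2)) = (\<integral>x. (\<integral>s. H (x, s) \<partial>M2) \<partial>M1)"
  proof (rule P12.integral_fst'[symmetric])
    show "integrable (M1 \<Otimes>\<^sub>M M2) H"
      by (rule P12f.integrable_const_bound[where B=1]) (auto simp: Hb)
  qed
  also have "\<dots> = (\<integral>x. f x * (\<integral>s. F s \<partial>M2) \<partial>M1)"
    unfolding H_def by simp
  also have "\<dots> = (\<integral>x. f x \<partial>M1) * (\<integral>s. F s \<partial>M2)"
    by simp
  also have "(\<integral>x. f x \<partial>M1) = p j k * (\<integral>x. f x \<partial>K j k)"
    unfolding M1_def by (subst integral_density) (auto simp: p_nonneg scaleR_conv_of_real fK)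
  also have "(\<integral>s. F s \<partial>M2) = (\<integral>\<omega>. F (WW M X 0 \<omega>) \<partial>Pm k)"
    unfolding M2_def by (subst integral_distr) auto
  finally show ?thesis unfolding E_def by simp
qed

lemma prob_M1:
  "measure (Pm j) {\<omega>\<in>space (Pm j). M 1 \<omega> = k} = p j k"
proof -
  interpret Pj: prob_space "Pm j" by (rule prob)
  define "is" where "is = (\<lambda>m::nat. if m = 0 then j else k)"
  have "measure (Pm j) {\<omega>\<in>space (Pm j). M 1 \<omega> = k} =
     measure (Pm j) {\<omega> \<in> space (Pm j). (\<forall>m\<le>1. M m \<omega> = is m) \<and> (\<forall>m\<in>{1..1}. X m \<omega> \<in> (\<lambda>_. UNIV) m)}"
  proof (rule measure_eq_AE)
    show "AE x in Pm j. (x \<in> {\<omega>\<in>space (Pm j). M 1 \<omega> = k}) \<longleftrightarrow>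
      (x \<in> {\<omega> \<in> space (Pm j). (\<forall>m\<le>1. M m \<omega> = is m) \<and> (\<forall>m\<in>{1..1}. X m \<omega> \<in> (\<lambda>_. UNIV) m)})"
      using M0_AE[of j]
    proof eventually_elim
      case (elim \<omega>)
      have "(\<forall>m\<le>1. M m \<omega> = is m) \<longleftrightarrow> M 0 \<omega> = j \<and> M 1 \<omega> = k"
        unfolding is_def using le_Suc_eq by auto
      then show ?case using elim by auto
    qed
  next
    show "{\<omega>\<in>space (Pm j). M 1 \<omega> = k} \<in> sets (Pm j)" by measurable
  next
    show "{\<omega> \<in> space (Pm j). (\<forall>m\<le>1. M m \<omega> = is m) \<and> (\<forall>m\<in>{1..1}. X m \<omega> \<in> (\<lambda>_. UNIV) m)} \<in> sets (Pm j)"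
      by (rule cyl_sets) simp
  qed
  also have "\<dots> = p j k"
    by (subst cyl_measure) (simp_all add: is_def)
  finally show ?thesis .
qed

lemma partition_has_sum:
  fixes Z :: "'b \<Rightarrow> complex"
  assumes Z[measurable]: "Z \<in> borel_measurable (Pm j)" and Zb: "\<And>\<omega>. norm (Z \<omega>) \<le> B"
  shows "((\<lambda>k. \<integral>\<omega>. indicator {\<omega>\<in>space (Pm j). M 1 \<omega> = k} \<omega> *\<^sub>R Z \<omega> \<partial>Pm j) has_sum (\<integral>\<omega>. Z \<omega> \<partial>Pm j)) UNIV"
proof -
  interpret Pj: prob_space "Pm j" by (rule prob)
  define I where "I k = {\<omega>\<in>space (Pm j). M 1 \<omega> = k}" for k
  define J where "J F = {\<omega>\<in>space (Pm j). M 1 \<omega> \<in> F}" for F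
  have I[measurable]: "I k \<in> sets (Pm j)" for k unfolding I_def by measurable
  have J[measurable]: "J F \<in> sets (Pm j)" for F unfolding J_def by measurable
  have B0: "0 \<le> B" using Zb[of undefined] norm_ge_zero[of "Z undefined"] by linarith
  have intg: "integrable (Pm j) (\<lambda>\<omega>. indicator A \<omega> *\<^sub>R Z \<omega>)" if [measurable]: "A \<in> sets (Pm j)" for A
    by (rule Pj.integrable_const_bound[where B=B]) (auto simp: indicator_def Zb B0)
  have sumind: "(\<Sum>k\<in>F. indicator (I k) \<omega>) = (indicator (J F) \<omega> :: real)" if "finite F" for F \<omega>
  proof (cases "\<omega> \<in> space (Pm j)")
    case True
    have "(\<Sum>k\<in>F. indicator (I k) \<omega>) = (\<Sum>k\<in>F. if M 1 \<omega> = k then 1 else (0::real))"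
      using True unfolding I_def by (intro sum.cong) (auto simp: indicator_def)
    also have "\<dots> = (if M 1 \<omega> \<in> F then 1 else 0)"
      using that by (simp add: sum.delta)
    finally show ?thesis using True unfolding J_def by (simp add: indicator_def)
  next
    case False then show ?thesis unfolding I_def J_def by (simp add: indicator_def)
  qed
  have intsum: "(\<Sum>k\<in>F. \<integral>\<omega>. indicator (I k) \<omega> *\<^sub>R Z \<omega> \<partial>Pm j) = (\<integral>\<omega>. indicator (J F) \<omega> *\<^sub>R Z \<omega> \<partial>Pm j)"
    if "finite F" for F
  proof -
    have "(\<Sum>k\<in>F. \<integral>\<omega>. indicator (I k) \<omega> *\<^sub>R Z \<omega> \<partial>Pm j) = (\<integral>\<omega>. (\<Sum>k\<in>F. indicator (I k) \<omega> *\<^sub>R Z \<omega>) \<partial>Pm j)"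
      by (subst Bochner_Integration.integral_sum) (auto intro: intg)
    also have "\<dots> = (\<integral>\<omega>. indicator (J F) \<omega> *\<^sub>R Z \<omega> \<partial>Pm j)"
      by (simp add: scaleR_sum_left[symmetric] sumind[OF that])
    finally show ?thesis .
  qed
  have measJ: "measure (Pm j) (J F) = (\<Sum>k\<in>F. p j k)" if "finite F" for F
  proof -
    have "measure (Pm j) (J F) = (\<integral>\<omega>. indicator (J F) \<omega> \<partial>Pm j)"
      using J[of F] by (simp add: Int_absorb2 sets.sets_into_space)
    also have "\<dots> = (\<integral>\<omega>. (\<Sum>k\<in>F. indicator (I k) \<omega>) \<partial>Pm j)"
      by (simp add: sumind[OF that])
    also have "\<dots> = (\<Sum>k\<in>F. measure (Pm j) (I k))"
      by (subst Bochner_Integration.integral_sum) (auto simp: Int_absorb2 sets.sets_into_space intro!: Pj.integrable_const_bound[where B=1])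
    also have "\<dots> = (\<Sum>k\<in>F. p j k)"
      unfolding I_def by (intro sum.cong refl prob_M1)
    finally show ?thesis .
  qed
  have bound: "norm ((\<Sum>k\<in>F. \<integral>\<omega>. indicator (I k) \<omega> *\<^sub>R Z \<omega> \<partial>Pm j) - (\<integral>\<omega>. Z \<omega> \<partial>Pm j))
      \<le> B * (1 - (\<Sum>k\<in>F. p j k))" if "finite F" for F
  proof -
    have iZ: "integrable (Pm j) Z"
      by (rule Pj.integrable_const_bound[where B=B]) (auto simp: Zb)
    have "(\<Sum>k\<in>F. \<integral>\<omega>. indicator (I k) \<omega> *\<^sub>R Z \<omega> \<partial>Pm j) - (\<integral>\<omega>. Z \<omega> \<partial>Pm j)
        = (\<integral>\<omega>. indicator (J F) \<omega> *\<^sub>R Z \<omega> - Z \<omega> \<partial>Pm j)"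
      unfolding intsum[OF that] by (subst Bochner_Integration.integral_diff) (auto intro: intg iZ)
    also have "norm \<dots> \<le> (\<integral>\<omega>. B * (1 - indicator (J F) \<omega>) \<partial>Pm j)"
    proof -
      have i1: "integrable (Pm j) (\<lambda>\<omega>. indicator (J F) \<omega> *\<^sub>R Z \<omega> - Z \<omega>)" by (intro Bochner_Integration.integrable_diff intg iZ J)
      have "norm (\<integral>\<omega>. indicator (J F) \<omega> *\<^sub>R Z \<omega> - Z \<omega> \<partial>Pm j) \<le> (\<integral>\<omega>. norm (indicator (J F) \<omega> *\<^sub>R Z \<omega> - Z \<omega>) \<partial>Pm j)"
        by (rule integral_norm_bound)
      also have "\<dots> \<le> (\<integral>\<omega>. B * (1 - indicator (J F) \<omega>) \<partial>Pm j)"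
      proof (rule integral_mono)
        show "integrable (Pm j) (\<lambda>\<omega>. norm (indicator (J F) \<omega> *\<^sub>R Z \<omega> - Z \<omega>))" using i1 by (rule integrable_norm)
        show "integrable (Pm j) (\<lambda>\<omega>. B * (1 - indicator (J F) \<omega>))" by (rule Pj.integrable_const_bound[where B="\<bar>B\<bar>"]) (auto simp: indicator_def)
        fix \<omega> show "norm (indicator (J F) \<omega> *\<^sub>R Z \<omega> - Z \<omega>) \<le> B * (1 - indicator (J F) \<omega>)"
          using Zb[of \<omega>] by (auto simp: indicator_def)
      qed
      finally show ?thesis .
    qed
    also have "\<dots> = B * (1 - measure (Pm j) (J F))"
      using J[of F] by (subst integral_mult_right_zero, subst Bochner_Integration.integral_diff) (auto simp: Int_absorb2 sets.sets_into_space Pj.prob_space intro!: Pj.integrable_const_bound[where B=1])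
    finally show ?thesis by (simp add: measJ[OF that])
  qed
  have p1: "(sum (p j) \<longlongrightarrow> 1) (finite_subsets_at_top UNIV)"
    using p_sum[of j] unfolding has_sum_def .
  have "((\<lambda>F. (\<Sum>k\<in>F. \<integral>\<omega>. indicator (I k) \<omega> *\<^sub>R Z \<omega> \<partial>Pm j) - (\<integral>\<omega>. Z \<omega> \<partial>Pm j)) \<longlongrightarrow> 0) (finite_subsets_at_top UNIV)"
  proof (rule Lim_null_comparison)
    show "eventually (\<lambda>G. norm ((\<Sum>k\<in>G. \<integral>\<omega>. indicator (I k) \<omega> *\<^sub>R Z \<omega> \<partial>Pm j) - (\<integral>\<omega>. Z \<omega> \<partial>Pm j)) \<le> B * (1 - (\<Sum>k\<in>G. p j k))) (finite_subsets_at_top UNIV)"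
      by (rule eventually_finite_subsets_at_top_weakI) (rule bound)
    show "((\<lambda>F. B * (1 - (\<Sum>k\<in>F. p j k))) \<longlongrightarrow> 0) (finite_subsets_at_top UNIV)"
      using tendsto_mult[OF tendsto_const[of B] tendsto_diff[OF tendsto_const[of 1] p1]] by simp
  qed
  then have "((\<lambda>F. (\<Sum>k\<in>F. \<integral>\<omega>. indicator (I k) \<omega> *\<^sub>R Z \<omega> \<partial>Pm j)) \<longlongrightarrow> (\<integral>\<omega>. Z \<omega> \<partial>Pm j)) (finite_subsets_at_top UNIV)"
    by (rule LIM_zero_cancel)
  then show ?thesis unfolding has_sum_def I_def .
qed

end



definition Lam :: "((nat \<Rightarrow> ereal) \<Rightarrow> ereal) \<Rightarrow> (nat \<Rightarrow> 'a \<times> real) \<Rightarrow> ereal" where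
  "Lam Lf s = Lf (\<lambda>n. ereal (\<Sum>m\<in>{1..n}. snd (s m)))"

definition LfOK :: "((nat \<Rightarrow> ereal) \<Rightarrow> ereal) \<Rightarrow> bool" where
  "LfOK Lf \<longleftrightarrow> (\<forall>s. Lf (\<lambda>n. s (Suc n)) = Lf s) \<and> (\<forall>c s. Lf (\<lambda>n. ereal c + s n) = ereal c + Lf s)
     \<and> (Lf = liminf \<or> Lf = limsup)"

lemma LfOK_liminf: "LfOK (liminf :: (nat \<Rightarrow> ereal) \<Rightarrow> ereal)"
  unfolding LfOK_def
proof (intro conjI allI impI)
  fix s :: "nat \<Rightarrow> ereal"
  show "liminf (\<lambda>n. s (Suc n)) = liminf s" using liminf_shift[of s] by simp
next
  fix c :: real and s :: "nat \<Rightarrow> ereal"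
  show "liminf (\<lambda>n. ereal c + s n) = ereal c + liminf s"
    by (rule Liminf_add_ereal_left) auto
qed simp

lemma LfOK_limsup: "LfOK (limsup :: (nat \<Rightarrow> ereal) \<Rightarrow> ereal)"
  unfolding LfOK_def
proof (intro conjI allI impI)
  fix s :: "nat \<Rightarrow> ereal"
  show "limsup (\<lambda>n. s (Suc n)) = limsup s" using limsup_shift[of s] by simp
next
  fix c :: real and s :: "nat \<Rightarrow> ereal"
  show "limsup (\<lambda>n. ereal c + s n) = ereal c + limsup s"
    by (rule Limsup_add_ereal_left) auto
qed simp

lemma Lam_meas:
  assumes "LfOK Lf"
  shows "Lam Lf \<in> borel_measurable (SS :: (nat \<Rightarrow> 'a::countable \<times> real) measure)"
proof -
  have "(\<lambda>s. ereal (\<Sum>m\<in>{1..n}. snd (s m))) \<in> borel_measurable (SS :: (nat \<Rightarrow> 'a \<times> real) measure)" for n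
    by (intro borel_measurable_ereal borel_measurable_sum snd_meas) auto
  then show ?thesis using assms unfolding LfOK_def Lam_def
    by (auto intro!: borel_measurable_liminf borel_measurable_limsup)
qed

lemma Lam_WW:
  assumes "LfOK Lf"
  shows "Lam Lf (WW M X 0 \<omega>) = ereal (X 1 \<omega>) + Lam Lf (WW M X 1 \<omega>)"
proof -
  have sh: "Lf (\<lambda>n. s (Suc n)) = Lf s" for s using assms unfolding LfOK_def by blast
  have ad: "Lf (\<lambda>n. ereal c + s n) = ereal c + Lf s" for c s using assms unfolding LfOK_def by blast
  have "Lam Lf (WW M X 0 \<omega>) = Lf (\<lambda>n. ereal (\<Sum>m\<in>{1..n}. X m \<omega>))"
    unfolding Lam_def WW_def by simp
  also have "\<dots> = Lf (\<lambda>n. ereal (\<Sum>m\<in>{1..Suc n}. X m \<omega>))"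
    by (rule sh[symmetric])
  also have "(\<lambda>n. ereal (\<Sum>m\<in>{1..Suc n}. X m \<omega>)) = (\<lambda>n. ereal (X 1 \<omega>) + ereal (\<Sum>m\<in>{1..n}. X (m + 1) \<omega>))"
  proof
    fix n
    have "(\<Sum>m\<in>{1..Suc n}. X m \<omega>) = X 1 \<omega> + (\<Sum>m\<in>{Suc 1..Suc n}. X m \<omega>)"
      by (subst sum.atLeast_Suc_atMost) auto
    also have "(\<Sum>m\<in>{Suc 1..Suc n}. X m \<omega>) = (\<Sum>m\<in>{1..n}. X (m + 1) \<omega>)"
      by (subst sum.shift_bounds_cl_Suc_ivl) simp
    finally show "ereal (\<Sum>m\<in>{1..Suc n}. X m \<omega>) = ereal (X 1 \<omega>) + ereal (\<Sum>m\<in>{1..n}. X (m + 1) \<omega>)"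
      by simp
  qed
  also have "Lf \<dots> = ereal (X 1 \<omega>) + Lf (\<lambda>n. ereal (\<Sum>m\<in>{1..n}. X (m + 1) \<omega>))"
    by (rule ad)
  also have "Lf (\<lambda>n. ereal (\<Sum>m\<in>{1..n}. X (m + 1) \<omega>)) = Lam Lf (WW M X 1 \<omega>)"
    unfolding Lam_def WW_def by simp
  finally show ?thesis .
qed


lemma abs_ereal_add_fin: "(\<bar>ereal c + e\<bar> \<noteq> \<infinity>) \<longleftrightarrow> (\<bar>e\<bar> \<noteq> \<infinity>)"
  by (cases e) auto

context MRWloc
begin

definition afin :: "((nat \<Rightarrow> ereal) \<Rightarrow> ereal) \<Rightarrow> 'a \<Rightarrow> real" where
  "afin Lf k = measure (Pm k) {\<omega>\<in>space (Pm k). \<bar>Lam Lf (WW M X 0 \<omega>)\<bar> \<noteq> \<infinity>}"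

lemma afin_eq:
  assumes Lf: "LfOK Lf"
  shows "((\<lambda>k. p j k * afin Lf k) has_sum afin Lf j) UNIV"
proof -
  have Lm[measurable]: "(Lam Lf :: (nat \<Rightarrow> 'a \<times> real) \<Rightarrow> ereal) \<in> borel_measurable SS" by (rule Lam_meas[OF Lf])
  define S :: "(nat \<Rightarrow> 'a \<times> real) set" where "S = {s. \<bar>Lam Lf s\<bar> \<noteq> \<infinity>}"
  have S[measurable]: "S \<in> sets SS"
  proof -
    have "S = Lam Lf -` (UNIV - {\<infinity>, -\<infinity>}) \<inter> space SS" unfolding S_def by auto
    also have "\<dots> \<in> sets SS" by (rule measurable_sets[OF Lm]) auto
    finally show ?thesis .
  qed
  define F where "F s = complex_of_real (indicator S s)" for s
  have F[measurable]: "F \<in> borel_measurable SS" unfolding F_def by measurable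
  have intF: "(\<integral>\<omega>. F (WW M X 0 \<omega>) \<partial>Pm k) = complex_of_real (afin Lf k)" for k
  proof -
    have "(\<integral>\<omega>. F (WW M X 0 \<omega>) \<partial>Pm k) = complex_of_real (\<integral>\<omega>. indicator {\<omega>\<in>space (Pm k). \<bar>Lam Lf (WW M X 0 \<omega>)\<bar> \<noteq> \<infinity>} \<omega> \<partial>Pm k)"
      unfolding F_def by (subst integral_complex_of_real[symmetric]) (intro Bochner_Integration.integral_cong refl, auto simp: S_def indicator_def)
    also have "\<dots> = complex_of_real (afin Lf k)"
    proof -
      have "{\<omega>\<in>space (Pm k). \<bar>Lam Lf (WW M X 0 \<omega>)\<bar> \<noteq> \<infinity>} = WW M X 0 -` S \<inter> space (Pm k)"
        unfolding S_def by auto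
      then have "{\<omega>\<in>space (Pm k). \<bar>Lam Lf (WW M X 0 \<omega>)\<bar> \<noteq> \<infinity>} \<in> sets (Pm k)" by simp
      then show ?thesis unfolding afin_def by (simp add: Int_absorb2 sets.sets_into_space)
    qed
    finally show ?thesis .
  qed
  have "((\<lambda>k. \<integral>\<omega>. indicator {\<omega>\<in>space (Pm j). M 1 \<omega> = k} \<omega> *\<^sub>R F (WW M X 0 \<omega>) \<partial>Pm j) has_sum
     (\<integral>\<omega>. F (WW M X 0 \<omega>) \<partial>Pm j)) UNIV"
    by (rule partition_has_sum[where B=1]) (auto simp: F_def indicator_def)
  moreover have "(\<integral>\<omega>. indicator {\<omega>\<in>space (Pm j). M 1 \<omega> = k} \<omega> *\<^sub>R F (WW M X 0 \<omega>) \<partial>Pm j)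
      = complex_of_real (p j k * afin Lf k)" for k
  proof -
    define one where "one = (\<lambda>x::real. 1::complex)"
    have "F (WW M X 0 \<omega>) = one (X 1 \<omega>) * F (WW M X 1 \<omega>)" for \<omega>
      unfolding F_def S_def one_def by (simp add: Lam_WW[OF Lf] abs_ereal_add_fin indicator_def)
    then have "(\<integral>\<omega>. indicator {\<omega>\<in>space (Pm j). M 1 \<omega> = k} \<omega> *\<^sub>R F (WW M X 0 \<omega>) \<partial>Pm j)
      = (\<integral>\<omega>. indicator {\<omega>\<in>space (Pm j). M 1 \<omega> = k} \<omega> *\<^sub>R (one (X 1 \<omega>) * F (WW M X 1 \<omega>)) \<partial>Pm j)"
      by presburger
    also have "\<dots> = complex_of_real (p j k) * (\<integral>x. one x \<partial>K j k) * (\<integral>\<omega>. F (WW M X 0 \<omega>) \<partial>Pm k)"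
      by (rule factor_integral) (auto simp: F_def indicator_def one_def)
    also have "\<dots> = complex_of_real (p j k * afin Lf k)"
      using prob_space.prob_space[OF K_prob[of j k]] by (simp add: intF one_def)
    finally show ?thesis .
  qed
  ultimately have "((\<lambda>k. complex_of_real (p j k * afin Lf k)) has_sum complex_of_real (afin Lf j)) UNIV"
    by (simp add: intF)
  then show ?thesis by (simp only: has_sum_of_real_iff)
qed


lemma pstep_nonneg: "0 \<le> pstep p n i k"
  by (induction n arbitrary: k) (auto intro!: infsum_nonneg mult_nonneg_nonneg p_nonneg)

lemma pstep_Suc_pos:
  assumes "pstep p (Suc n) i k > 0"
  shows "\<exists>m. pstep p n i m > 0 \<and> p m k > 0"
proof (rule ccontr)
  assume "\<not> ?thesis"
  then have "\<forall>m. pstep p n i m * p m k = 0"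
    using pstep_nonneg[of n i] p_nonneg by (metis less_eq_real_def mult_eq_0_iff)
  then have "pstep p (Suc n) i k = 0" by (simp add: infsum_0)
  then show False using assms by simp
qed

lemma propagate_one:
  assumes h: "((\<lambda>k. p j k * a k) has_sum 1) UNIV" and le: "\<And>k. a k \<le> 1" and pos: "p j k > 0"
  shows "a k = 1"
proof -
  have "((\<lambda>k. p j k + - (p j k * a k)) has_sum (1 + - 1)) UNIV"
    by (intro has_sum_add has_sum_uminus[THEN iffD2] p_sum) (simp add: h)
  then have h2: "((\<lambda>k. p j k * (1 - a k)) has_sum 0) UNIV"
    by (simp add: algebra_simps)
  have "p j k * (1 - a k) = 0"
    by (rule nonneg_has_sum_le_0D[OF h2]) (auto intro!: mult_nonneg_nonneg p_nonneg simp: le)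
  then show ?thesis using pos by simp
qed

lemma afin_le_1: "afin Lf k \<le> 1"
  unfolding afin_def by (rule prob_space.prob_le_1[OF prob])

lemma afin_all_one:
  assumes Lf: "LfOK Lf" and irr: "irreducible_matrix p" and one: "afin Lf i = 1"
  shows "afin Lf k = 1"
proof -
  obtain n where "pstep p n i k > 0" using irr unfolding irreducible_matrix_def by blast
  then show ?thesis
  proof (induction n arbitrary: k)
    case 0
    then have "k = i" by (auto split: if_splits)
    then show ?case using one by simp
  next
    case (Suc n)
    then obtain m where m: "pstep p n i m > 0" "p m k > 0" using pstep_Suc_pos by blast
    have "afin Lf m = 1" using Suc.IH m(1) by blast
    then have "((\<lambda>k. p m k * afin Lf k) has_sum 1) UNIV" using afin_eq[OF Lf, of m] by simp
    then show ?case by (rule propagate_one[OF _ afin_le_1 m(2)])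
  qed
qed


definition phi :: "((nat \<Rightarrow> ereal) \<Rightarrow> ereal) \<Rightarrow> 'a \<Rightarrow> real \<Rightarrow> complex" where
  "phi Lf k t = (\<integral>\<omega>. iexp (t * real_of_ereal (Lam Lf (WW M X 0 \<omega>))) \<partial>Pm k)"

definition psi :: "'a \<Rightarrow> 'a \<Rightarrow> real \<Rightarrow> complex" where
  "psi j k t = (\<integral>x. iexp (t * x) \<partial>K j k)"

lemma AE_fin:
  assumes Lf: "LfOK Lf" and one: "afin Lf j = 1"
  shows "AE \<omega> in Pm j. \<bar>Lam Lf (WW M X 0 \<omega>)\<bar> \<noteq> \<infinity>"
proof -
  interpret Pj: prob_space "Pm j" by (rule prob)
  have "AE \<omega> in Pm j. \<omega> \<in> {\<omega>\<in>space (Pm j). \<bar>Lam Lf (WW M X 0 \<omega>)\<bar> \<noteq> \<infinity>}"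
    using one unfolding afin_def by (rule Pj.AE_prob_1)
  then show ?thesis by eventually_elim auto
qed

lemma char_eq:
  assumes Lf: "LfOK Lf" and one: "\<And>k. afin Lf k = 1"
  shows "((\<lambda>k. complex_of_real (p j k) * psi j k t * phi Lf k t) has_sum phi Lf j t) UNIV"
proof -
  have Lm[measurable]: "(Lam Lf :: (nat \<Rightarrow> 'a \<times> real) \<Rightarrow> ereal) \<in> borel_measurable SS" by (rule Lam_meas[OF Lf])
  define f where "f x = iexp (t * x)" for x
  define F :: "(nat \<Rightarrow> 'a \<times> real) \<Rightarrow> complex" where "F s = iexp (t * real_of_ereal (Lam Lf s))" for s
  have f[measurable]: "f \<in> borel_measurable borel" unfolding f_def by measurable
  have F[measurable]: "F \<in> borel_measurable SS" unfolding F_def by measurable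
  have "((\<lambda>k. \<integral>\<omega>. indicator {\<omega>\<in>space (Pm j). M 1 \<omega> = k} \<omega> *\<^sub>R F (WW M X 0 \<omega>) \<partial>Pm j) has_sum
     (\<integral>\<omega>. F (WW M X 0 \<omega>) \<partial>Pm j)) UNIV"
    by (rule partition_has_sum[where B=1]) (auto simp: F_def)
  moreover have "(\<integral>\<omega>. indicator {\<omega>\<in>space (Pm j). M 1 \<omega> = k} \<omega> *\<^sub>R F (WW M X 0 \<omega>) \<partial>Pm j)
      = complex_of_real (p j k) * psi j k t * phi Lf k t" for k
  proof -
    have "AE \<omega> in Pm j. F (WW M X 0 \<omega>) = f (X 1 \<omega>) * F (WW M X 1 \<omega>)"
      using AE_fin[OF Lf one[of j]]
    proof eventually_elim
      case (elim \<omega>)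
      then have fin: "\<bar>Lam Lf (WW M X 1 \<omega>)\<bar> \<noteq> \<infinity>" by (simp add: Lam_WW[OF Lf] abs_ereal_add_fin)
      then obtain r where r: "Lam Lf (WW M X 1 \<omega>) = ereal r" by (cases "Lam Lf (WW M X 1 \<omega>)") auto
      show ?case unfolding F_def f_def Lam_WW[OF Lf] r
        by (simp add: distrib_left exp_add[symmetric] algebra_simps)
    qed
    then have "(\<integral>\<omega>. indicator {\<omega>\<in>space (Pm j). M 1 \<omega> = k} \<omega> *\<^sub>R F (WW M X 0 \<omega>) \<partial>Pm j)
      = (\<integral>\<omega>. indicator {\<omega>\<in>space (Pm j). M 1 \<omega> = k} \<omega> *\<^sub>R (f (X 1 \<omega>) * F (WW M X 1 \<omega>)) \<partial>Pm j)"
      by (intro integral_cong_AE) (auto elim!: eventually_mono)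
    also have "\<dots> = complex_of_real (p j k) * (\<integral>x. f x \<partial>K j k) * (\<integral>\<omega>. F (WW M X 0 \<omega>) \<partial>Pm k)"
      by (rule factor_integral) (auto simp: F_def f_def)
    finally show ?thesis unfolding psi_def phi_def f_def F_def .
  qed
  ultimately show ?thesis unfolding phi_def F_def by simp
qed

end




lemma harmonic_eq:
  fixes p :: "'a \<Rightarrow> 'a \<Rightarrow> real" and u U \<pi> :: "'a \<Rightarrow> real"
  assumes pnn: "\<And>i j. 0 \<le> p i j" and psum: "\<And>i. (p i has_sum 1) UNIV"
    and stat: "stationary_distribution p \<pi>" and pos: "\<And>j. \<pi> j > 0"
    and u0: "\<And>k. 0 \<le> u k" and u1: "\<And>k. u k \<le> 1"
    and hU: "\<And>j. ((\<lambda>k. p j k * u k) has_sum U j) UNIV" and sub: "\<And>j. u j \<le> U j"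
  shows "U j = u j"
proof -
  have \<pi>0: "\<And>j. 0 \<le> \<pi> j" and \<pi>1: "(\<pi> has_sum 1) UNIV"
    and \<pi>st: "\<And>k. ((\<lambda>j. \<pi> j * p j k) has_sum \<pi> k) UNIV"
    using stat unfolding stationary_distribution_def by auto
  define h where "h = (\<lambda>(j, k). \<pi> j * p j k)"
  define g where "g = (\<lambda>(j, k). \<pi> j * p j k * u k)"
  have rowh: "((\<lambda>k. norm (h (j, k))) has_sum \<pi> j) UNIV" for j
  proof -
    have "((\<lambda>k. \<pi> j * p j k) has_sum \<pi> j * 1) UNIV" by (rule has_sum_cmult_right[OF psum])
    then show ?thesis unfolding h_def using \<pi>0 pnn by (simp add: abs_mult)
  qed
  have habs: "(\<lambda>x. norm (h x)) summable_on UNIV \<times> UNIV"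
  proof (subst Infinite_Sum.abs_summable_on_Sigma_iff, intro conjI ballI)
    fix j show "(\<lambda>k. norm (h (j, k))) summable_on UNIV" using rowh[of j] by (rule has_sum_imp_summable)
  next
    have e: "infsum (\<lambda>k. \<bar>h (j, k)\<bar>) UNIV = \<pi> j" for j using rowh[of j] by (auto intro!: infsumI)
    have "(\<lambda>j. norm (\<pi> j)) summable_on UNIV" using \<pi>1 \<pi>0 by (simp add: has_sum_imp_summable)
    then show "(\<lambda>j. norm (infsum (\<lambda>k. norm (h (j, k))) UNIV)) summable_on UNIV" by (simp add: e)
  qed
  have gabs: "(\<lambda>x. norm (g x)) summable_on UNIV \<times> UNIV"
  proof (rule Infinite_Sum.abs_summable_on_comparison_test[OF habs])
    fix x :: "'a \<times> 'a"
    show "norm (g x) \<le> norm (h x)" unfolding g_def h_def using \<pi>0 pnn u0 u1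
      by (cases x) (auto simp: abs_mult intro!: mult_left_le mult_nonneg_nonneg)
  qed
  then have "g summable_on UNIV \<times> UNIV" by (rule Infinite_Sum.abs_summable_summable)
  then obtain S where gS: "(g has_sum S) (UNIV \<times> UNIV)" unfolding summable_on_def by blast
  have rows: "((\<lambda>j. \<pi> j * U j) has_sum S) UNIV"
  proof (rule has_sum_Sigma'[OF gS])
    fix j show "((\<lambda>k. g (j, k)) has_sum \<pi> j * U j) UNIV"
      unfolding g_def using has_sum_cmult_right[OF hU[of j], of "\<pi> j"] by (simp add: mult.assoc)
  qed
  have cols: "((\<lambda>k. \<pi> k * u k) has_sum S) UNIV"
  proof (rule has_sum_Sigma')
    show "((\<lambda>(k, j). g (j, k)) has_sum S) (UNIV \<times> UNIV)"
      using gS by (subst (asm) has_sum_swap) simp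
    fix k show "((\<lambda>j. (\<lambda>(k, j). g (j, k)) (k, j)) has_sum \<pi> k * u k) UNIV"
      unfolding g_def using has_sum_cmult_left[OF \<pi>st[of k], of "u k"] by simp
  qed
  have "((\<lambda>j. \<pi> j * U j + - (\<pi> j * u j)) has_sum (S + - S)) UNIV"
    by (intro has_sum_add rows has_sum_uminus[THEN iffD2]) (simp add: cols)
  then have d: "((\<lambda>j. \<pi> j * (U j - u j)) has_sum 0) UNIV" by (simp add: algebra_simps)
  have "\<pi> j * (U j - u j) = 0"
    by (rule nonneg_has_sum_le_0D[OF d]) (auto intro!: mult_nonneg_nonneg \<pi>0 simp: sub)
  then show ?thesis using pos[of j] by simp
qed


lemma unit_Re_one: "norm (z::complex) \<le> 1 \<Longrightarrow> Re z = 1 \<Longrightarrow> z = 1"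
proof -
  assume a: "norm z \<le> 1" "Re z = 1"
  have "(norm z)^2 \<le> 1" using a(1) norm_ge_zero[of z] by (simp add: power_le_one)
  then have "(Re z)^2 + (Im z)^2 \<le> 1" by (simp add: cmod_power2)
  then have "Im z = 0" using a(2) by simp
  then show "z = 1" using a(2) by (simp add: complex_eq_iff)
qed

lemma iexp_AE_const:
  fixes K :: "real measure"
  assumes P: "prob_space K" and sK: "sets K = sets borel" and n1: "norm (\<integral>x. iexp (t * x) \<partial>K) = 1"
  shows "AE x in K. iexp (t * x) = (\<integral>x. iexp (t * x) \<partial>K)"
proof -
  interpret prob_space K by (rule P)
  have [measurable_cong]: "sets K = sets borel" by (rule sK)
  define w where "w = (\<integral>x. iexp (t * x) \<partial>K)"
  have nw: "norm w = 1" using n1 unfolding w_def .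
  have ww: "w * cnj w = 1" using nw complex_norm_square[of w] by simp
  have wcw: "cnj w * w = 1" using ww by (simp add: mult.commute)
  have intg: "integrable K (\<lambda>x. iexp (t * x))"
    by (rule integrable_const_bound[where B=1]) auto
  have intg2: "integrable K (\<lambda>x. cnj w * iexp (t * x))" using intg by simp
  have "(\<integral>x. Re (cnj w * iexp (t * x)) \<partial>K) = Re (\<integral>x. cnj w * iexp (t * x) \<partial>K)"
    by (rule integral_Re[OF intg2])
  also have "(\<integral>x. cnj w * iexp (t * x) \<partial>K) = cnj w * w"
    unfolding w_def by (rule integral_mult_right_zero)
  also have "Re (cnj w * w) = 1" using wcw by simp
  finally have i1: "(\<integral>x. Re (cnj w * iexp (t * x)) \<partial>K) = 1" .
  have le: "Re (cnj w * iexp (t * x)) \<le> 1" for x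
  proof -
    have "Re (cnj w * iexp (t * x)) \<le> norm (cnj w * iexp (t * x))" by (rule complex_Re_le_cmod)
    also have "\<dots> = 1" using nw by (simp add: norm_mult)
    finally show ?thesis .
  qed
  have intg3: "integrable K (\<lambda>x. Re (cnj w * iexp (t * x)))" using intg2 by (rule integrable_Re)
  have "(\<integral>x. 1 - Re (cnj w * iexp (t * x)) \<partial>K) = (\<integral>x. 1 \<partial>K) - (\<integral>x. Re (cnj w * iexp (t * x)) \<partial>K)"
    by (rule Bochner_Integration.integral_diff[OF _ intg3]) simp
  also have "\<dots> = 0" unfolding i1 by (simp add: prob_space)
  finally have "(\<integral>x. 1 - Re (cnj w * iexp (t * x)) \<partial>K) = 0" .
  then have "AE x in K. 1 - Re (cnj w * iexp (t * x)) = 0"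
    using intg3 le by (subst integral_nonneg_eq_0_iff_AE[symmetric]) (use intg3 le in auto)
  then show ?thesis
  proof eventually_elim
    case (elim x)
    have "cnj w * iexp (t * x) = 1"
      by (rule unit_Re_one) (use elim nw in \<open>auto simp: norm_mult\<close>)
    then have "w * (cnj w * iexp (t * x)) = w" by simp
    then have "(w * cnj w) * iexp (t * x) = w" by (simp only: mult.assoc)
    moreover note ww
    ultimately have "iexp (t * x) = w" by simp
    then show ?case unfolding w_def .
  qed
qed


lemma iexp_eq_imp:
  fixes t d :: real
  assumes t: "0 < t" and td: "t * \<bar>d\<bar> < 2 * pi" and e: "iexp (t * d) = 1"
  shows "d = 0"
proof (rule ccontr)
  assume d: "d \<noteq> 0"
  from e obtain n :: int where n: "Im (\<i> * complex_of_real (t * d)) = of_int (2 * n) * pi"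
    unfolding exp_eq_1 by auto
  then have n': "t * d = 2 * of_int n * pi" by simp
  have "t * \<bar>d\<bar> = \<bar>t * d\<bar>" using t by (simp add: abs_mult)
  also have "\<dots> = 2 * \<bar>of_int n\<bar> * pi" unfolding n' by (simp add: abs_mult)
  finally have a: "t * \<bar>d\<bar> = 2 * \<bar>of_int n\<bar> * pi" .
  have "0 < t * \<bar>d\<bar>" using t d by simp
  then have "n \<noteq> 0" using a by auto
  then have "1 \<le> \<bar>of_int n :: real\<bar>" by linarith
  then have "2 * pi \<le> 2 * \<bar>of_int n\<bar> * pi" using pi_gt_zero by simp
  then show False using a td by linarith
qed

lemma dirac_from_char:
  fixes K :: "real measure"
  assumes P: "prob_space K" and sK: "sets K = sets borel" and \<delta>: "\<delta> > 0"
    and n1: "\<And>t. 0 < t \<Longrightarrow> t < \<delta> \<Longrightarrow> norm (\<integral>x. iexp (t * x) \<partial>K) = 1"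
  shows "\<exists>c. AE x in K. x = c"
proof -
  interpret prob_space K by (rule P)
  define T where "T = {t \<in> \<rat>. 0 < t \<and> t < \<delta>}"
  have cT: "countable T" unfolding T_def by (rule countable_subset[OF _ countable_rat]) auto
  have "AE x in K. \<forall>t\<in>T. iexp (t * x) = (\<integral>x. iexp (t * x) \<partial>K)"
    unfolding AE_ball_countable[OF cT]
    by (intro ballI iexp_AE_const P sK n1) (auto simp: T_def)
  then have AEx: "AE x in K. \<forall>t\<in>T. iexp (t * x) = (\<integral>x. iexp (t * x) \<partial>K)" .
  obtain x0 where x0: "\<forall>t\<in>T. iexp (t * x0) = (\<integral>x. iexp (t * x) \<partial>K)"
  proof (rule ccontr)
    assume "\<not> thesis"
    then have nx: "\<forall>x. \<not> (\<forall>t\<in>T. iexp (t * x) = (\<integral>x. iexp (t * x) \<partial>K))" using that by blast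
    have "AE x in K. False" using AEx by eventually_elim (use nx in blast)
    then show False by simp
  qed
  have "AE x in K. x = x0"
    using AEx
  proof eventually_elim
    case (elim x)
    show "x = x0"
    proof (rule ccontr)
      assume ne: "x \<noteq> x0"
      then have dpos: "0 < \<bar>x - x0\<bar>" by simp
      define b where "b = min \<delta> (2 * pi / \<bar>x - x0\<bar>)"
      have b: "0 < b" unfolding b_def using \<delta> dpos by simp
      obtain t where t: "t \<in> \<rat>" "0 < t" "t < b" using Rats_dense_in_real[OF b] by blast
      have tT: "t \<in> T" unfolding T_def using t b_def by auto
      have "iexp (t * x) = iexp (t * x0)" using elim x0 tT by simp
      then have "iexp (t * (x - x0)) = 1"
        by (simp add: right_diff_distrib exp_diff)
      moreover have "t * \<bar>x - x0\<bar> < 2 * pi"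
      proof -
        have "t < 2 * pi / \<bar>x - x0\<bar>" using t(3) unfolding b_def by simp
        then show ?thesis using dpos by (simp add: field_simps)
      qed
      ultimately have "x - x0 = 0" using iexp_eq_imp[OF t(2)] by blast
      then show False using ne by simp
    qed
  qed
  then show ?thesis by blast
qed




lemma norm_Re_eq: "norm (z::complex) \<le> r \<Longrightarrow> Re z = r \<Longrightarrow> z = complex_of_real r"
proof -
  assume a: "norm z \<le> r" "Re z = r"
  have r0: "0 \<le> r" using a(1) norm_ge_zero[of z] by linarith
  have "(norm z)^2 \<le> r^2" using a(1) norm_ge_zero[of z] by (simp add: power_mono)
  then have "(Re z)^2 + (Im z)^2 \<le> r^2" by (simp add: cmod_power2)
  then have "Im z = 0" using a(2) by simp
  then show "z = complex_of_real r" using a(2) by (simp add: complex_eq_iff)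
qed

context MRWloc
begin

lemma pi_pos:
  assumes irr: "irreducible_matrix p" and stat: "stationary_distribution p \<pi>"
  shows "\<pi> k > 0"
proof -
  have \<pi>0: "\<And>j. 0 \<le> \<pi> j" and \<pi>1: "(\<pi> has_sum 1) UNIV"
    and \<pi>st: "\<And>k. ((\<lambda>j. \<pi> j * p j k) has_sum \<pi> k) UNIV"
    using stat unfolding stationary_distribution_def by auto
  obtain i0 where i0: "\<pi> i0 > 0"
  proof (rule ccontr)
    assume "\<not> thesis"
    then have "\<forall>j. \<pi> j = 0" using that \<pi>0 by (metis less_eq_real_def)
    then have "(\<pi> has_sum 0) UNIV" by (intro has_sum_0) auto
    with \<pi>1 show False using has_sum_unique by fastforce
  qed
  have step: "\<pi> j * p j k \<le> \<pi> k" for j k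
  proof -
    have "((\<lambda>j. \<pi> j * p j k) has_sum (\<Sum>j'\<in>{j}. \<pi> j' * p j' k)) {j}" by (rule has_sum_finite) simp
    then show ?thesis using has_sum_mono2[OF _ \<pi>st[of k], of "{j}"] \<pi>0 p_nonneg
      by (auto intro!: mult_nonneg_nonneg)
  qed
  obtain n where "pstep p n i0 k > 0" using irr unfolding irreducible_matrix_def by blast
  then show ?thesis
  proof (induction n arbitrary: k)
    case 0
    then show ?case using i0 by (auto split: if_splits)
  next
    case (Suc n)
    then obtain m where m: "pstep p n i0 m > 0" "p m k > 0" using pstep_Suc_pos by blast
    have "\<pi> m > 0" using Suc.IH m(1) by blast
    then have "0 < \<pi> m * p m k" using m(2) by simp
    also have "\<dots> \<le> \<pi> k" by (rule step)
    finally show ?case .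
  qed
qed

lemma K_realdist: "real_distribution (K j k)"
  unfolding real_distribution_def real_distribution_axioms_def using K_prob K_sets by auto

lemma psi_char: "psi j k t = char (K j k) t"
  unfolding psi_def char_def ..

lemma psi_norm_le: "norm (psi j k t) \<le> 1"
  unfolding psi_char by (rule real_distribution.cmod_char_le_1[OF K_realdist])

lemma phi_char:
  assumes Lf: "LfOK Lf"
  shows "phi Lf k t = char (distr (Pm k) borel (\<lambda>\<omega>. real_of_ereal (Lam Lf (WW M X 0 \<omega>)))) t"
proof -
  have Lm[measurable]: "(Lam Lf :: (nat \<Rightarrow> 'a \<times> real) \<Rightarrow> ereal) \<in> borel_measurable SS" by (rule Lam_meas[OF Lf])
  show ?thesis unfolding phi_def char_def by (subst integral_distr) auto
qed

lemma phi_realdist: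
  assumes Lf: "LfOK Lf"
  shows "real_distribution (distr (Pm k) borel (\<lambda>\<omega>. real_of_ereal (Lam Lf (WW M X 0 \<omega>))))"
proof -
  have Lm[measurable]: "(Lam Lf :: (nat \<Rightarrow> 'a \<times> real) \<Rightarrow> ereal) \<in> borel_measurable SS" by (rule Lam_meas[OF Lf])
  interpret Pk: prob_space "Pm k" by (rule prob)
  show ?thesis by (rule Pk.real_distribution_distr) measurable
qed

lemma phi_norm_le:
  assumes Lf: "LfOK Lf"
  shows "norm (phi Lf k t) \<le> 1"
  unfolding phi_char[OF Lf] by (rule real_distribution.cmod_char_le_1[OF phi_realdist[OF Lf]])

lemma phi_nonzero:
  assumes Lf: "LfOK Lf"
  shows "\<exists>\<delta>>0. \<forall>t. \<bar>t\<bar> < \<delta> \<longrightarrow> phi Lf k t \<noteq> 0"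
proof -
  let ?D = "distr (Pm k) borel (\<lambda>\<omega>. real_of_ereal (Lam Lf (WW M X 0 \<omega>)))"
  have c: "isCont (char ?D) 0" by (rule real_distribution.isCont_char[OF phi_realdist[OF Lf]])
  have c0: "char ?D 0 = 1" by (rule real_distribution.char_zero[OF phi_realdist[OF Lf]])
  have "(char ?D \<longlongrightarrow> char ?D 0) (nhds 0)"
    using c by (simp only: isCont_def tendsto_at_iff_tendsto_nhds)
  then have "(char ?D \<longlongrightarrow> 1) (nhds 0)" by (simp only: c0)
  then have "eventually (\<lambda>t. char ?D t \<in> - {0}) (nhds 0)"
    by (rule topological_tendstoD) auto
  then obtain d where d: "d > 0" "\<forall>t. dist t 0 < d \<longrightarrow> char ?D t \<in> - {0}"
    unfolding eventually_nhds_metric by blast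
  show ?thesis using d unfolding phi_char[OF Lf] by (intro exI[of _ d]) auto
qed


lemma harmonic_phi:
  assumes Lf: "LfOK Lf" and irr: "irreducible_matrix p" and stat: "stationary_distribution p \<pi>"
    and one: "\<And>k. afin Lf k = 1"
  shows "((\<lambda>k. p j k * norm (phi Lf k t)) has_sum norm (phi Lf j t)) UNIV"
proof -
  define u where "u k = norm (phi Lf k t)" for k
  have u0: "0 \<le> u k" for k unfolding u_def by simp
  have u1: "u k \<le> 1" for k unfolding u_def by (rule phi_norm_le[OF Lf])
  have summ: "(\<lambda>k. p j k * u k) summable_on UNIV" for j
    by (rule summable_on_comparison_test[OF has_sum_imp_summable[OF p_sum[of j]]])
      (auto intro!: mult_nonneg_nonneg p_nonneg u0 mult_left_le u1)
  define U where "U j = infsum (\<lambda>k. p j k * u k) UNIV" for j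
  have hU: "((\<lambda>k. p j k * u k) has_sum U j) UNIV" for j
    unfolding U_def using summ[of j] by (simp add: summable_iff_has_sum_infsum[symmetric])
  have sub: "u j \<le> U j" for j
  proof -
    have nb: "norm (complex_of_real (p j k) * psi j k t * phi Lf k t) \<le> p j k * u k" for k
    proof -
      have "norm (complex_of_real (p j k) * psi j k t * phi Lf k t) = p j k * (norm (psi j k t) * u k)"
        unfolding u_def by (simp add: norm_mult abs_of_nonneg p_nonneg)
      also have "\<dots> \<le> p j k * u k"
        by (intro mult_left_mono mult_left_le_one_le) (auto simp: psi_norm_le p_nonneg u0)
      finally show ?thesis .
    qed
    have sn: "(\<lambda>k. norm (complex_of_real (p j k) * psi j k t * phi Lf k t)) summable_on UNIV"
      by (rule summable_on_comparison_test[OF summ[of j]]) (auto simp: nb)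
    then obtain N where hN: "((\<lambda>k. norm (complex_of_real (p j k) * psi j k t * phi Lf k t)) has_sum N) UNIV"
      unfolding summable_on_def by blast
    have "u j \<le> N" unfolding u_def by (rule norm_has_sum_bound[OF hN char_eq[OF Lf one]])
    also have "N \<le> U j" by (rule has_sum_mono[OF hN hU]) (rule nb)
    finally show ?thesis .
  qed
  have "U j = u j"
    by (rule harmonic_eq[OF p_nonneg p_sum stat pi_pos[OF irr stat] u0 u1 hU sub])
  then show ?thesis using hU[of j] unfolding u_def by simp
qed

lemma phase_rel:
  assumes Lf: "LfOK Lf" and irr: "irreducible_matrix p" and stat: "stationary_distribution p \<pi>"
    and one: "\<And>k. afin Lf k = 1" and pjk: "p j k > 0"
    and nj: "phi Lf j t \<noteq> 0" and nk: "phi Lf k t \<noteq> 0"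
  shows "norm (psi j k t) = 1 \<and>
    psi j k t * (phi Lf k t / complex_of_real (norm (phi Lf k t))) = phi Lf j t / complex_of_real (norm (phi Lf j t))"
proof -
  define u where "u k = norm (phi Lf k t)" for k
  have uj: "u j > 0" and uk: "u k > 0" using nj nk unfolding u_def by auto
  define \<theta> where "\<theta> = phi Lf j t / complex_of_real (u j)"
  have n\<theta>: "norm \<theta> = 1" unfolding \<theta>_def u_def using nj by (simp add: norm_divide)
  have \<theta>c: "\<theta> * cnj \<theta> = 1" using n\<theta> complex_norm_square[of \<theta>] by simp
  define w where "w = cnj \<theta>"
  have nw: "norm w = 1" unfolding w_def using n\<theta> by simp
  have wphi: "w * phi Lf j t = complex_of_real (u j)"
  proof -
    have "phi Lf j t = \<theta> * complex_of_real (u j)" unfolding \<theta>_def using uj by simp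
    then show ?thesis unfolding w_def using \<theta>c by (simp add: mult.assoc[symmetric] mult.commute)
  qed
  have h0: "((\<lambda>k. Re (w * (complex_of_real (p j k) * psi j k t * phi Lf k t))) has_sum Re (w * phi Lf j t)) UNIV"
    by (rule has_sum_Re[OF has_sum_cmult_right[OF char_eq[OF Lf one]]])
  have "Re (w * phi Lf j t) = u j" using wphi by simp
  note h1 = h0[unfolded this]
  have h2: "((\<lambda>k. p j k * u k) has_sum u j) UNIV"
    unfolding u_def by (rule harmonic_phi[OF Lf irr stat one])
  have "((\<lambda>k. p j k * u k + - Re (w * (complex_of_real (p j k) * psi j k t * phi Lf k t))) has_sum (u j + - u j)) UNIV"
    by (intro has_sum_add h2 has_sum_uminus[THEN iffD2]) (simp only: minus_minus, rule h1)
  then have h3: "((\<lambda>k. p j k * u k - Re (w * (complex_of_real (p j k) * psi j k t * phi Lf k t))) has_sum 0) UNIV"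
    by (simp only: add_uminus_conv_diff right_minus diff_self)
  have bnd: "norm (w * (psi j k' t * phi Lf k' t)) \<le> u k'" for k'
    unfolding u_def using psi_norm_le[of j k' t] nw by (simp add: norm_mult mult_left_le_one_le)
  have nn: "0 \<le> p j k' * u k' - Re (w * (complex_of_real (p j k') * psi j k' t * phi Lf k' t))" for k'
  proof -
    have "Re (w * (complex_of_real (p j k') * psi j k' t * phi Lf k' t)) = p j k' * Re (w * (psi j k' t * phi Lf k' t))"
      by (simp add: algebra_simps)
    also have "\<dots> \<le> p j k' * u k'"
      using bnd[of k'] complex_Re_le_cmod[of "w * (psi j k' t * phi Lf k' t)"] p_nonneg[of j k']
      by (intro mult_left_mono) auto
    finally show ?thesis by simp
  qed
  have "p j k * u k - Re (w * (complex_of_real (p j k) * psi j k t * phi Lf k t)) = 0"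
    by (rule nonneg_has_sum_le_0D[OF h3]) (simp_all only: nn order_refl UNIV_I)
  moreover have "Re (w * (complex_of_real (p j k) * psi j k t * phi Lf k t)) = p j k * Re (w * (psi j k t * phi Lf k t))"
    by (simp add: algebra_simps)
  ultimately have "Re (w * (psi j k t * phi Lf k t)) = u k" using pjk by simp
  then have eq: "w * (psi j k t * phi Lf k t) = complex_of_real (u k)" by (rule norm_Re_eq[OF bnd])
  have "norm (psi j k t) * u k = u k"
  proof -
    have "norm (w * (psi j k t * phi Lf k t)) = u k" unfolding eq using uk by simp
    then show ?thesis unfolding u_def using nw by (simp add: norm_mult)
  qed
  then have n1: "norm (psi j k t) = 1" using uk by simp
  have "\<theta> * (w * (psi j k t * phi Lf k t)) = \<theta> * complex_of_real (u k)" using eq by simp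
  then have "psi j k t * phi Lf k t = \<theta> * complex_of_real (u k)"
    unfolding w_def by (simp add: mult.assoc[symmetric] \<theta>c)
  then have "psi j k t * (phi Lf k t / complex_of_real (u k)) = \<theta>"
    using uk by (simp add: field_simps)
  then show ?thesis using n1 unfolding \<theta>_def u_def by simp
qed


definition theta :: "((nat \<Rightarrow> ereal) \<Rightarrow> ereal) \<Rightarrow> 'a \<Rightarrow> real \<Rightarrow> complex" where
  "theta Lf k t = phi Lf k t / complex_of_real (norm (phi Lf k t))"

lemma theta_nz: "phi Lf k t \<noteq> 0 \<Longrightarrow> theta Lf k t \<noteq> 0"
  unfolding theta_def by simp

context
  fixes Lf :: "(nat \<Rightarrow> ereal) \<Rightarrow> ereal" and \<pi> :: "'a \<Rightarrow> real"
  assumes Lf: "LfOK Lf" and irr: "irreducible_matrix p" and stat: "stationary_distribution p \<pi>"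
    and one: "\<And>k. afin Lf k = 1"
begin

definition dk :: "'a \<Rightarrow> real" where
  "dk k = (SOME \<delta>. \<delta> > 0 \<and> (\<forall>t. \<bar>t\<bar> < \<delta> \<longrightarrow> phi Lf k t \<noteq> 0))"

lemma dk: "dk k > 0" "\<bar>t\<bar> < dk k \<Longrightarrow> phi Lf k t \<noteq> 0"
proof -
  have "\<exists>\<delta>. \<delta> > 0 \<and> (\<forall>t. \<bar>t\<bar> < \<delta> \<longrightarrow> phi Lf k t \<noteq> 0)" using phi_nonzero[OF Lf, of k] by blast
  from someI_ex[OF this] show "dk k > 0" "\<bar>t\<bar> < dk k \<Longrightarrow> phi Lf k t \<noteq> 0"
    unfolding dk_def by blast+
qed

lemma edge_rel:
  assumes pjk: "p j k > 0" and t: "0 < t" "t < min (dk j) (dk k)"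
  shows "norm (psi j k t) = 1 \<and> psi j k t * theta Lf k t = theta Lf j t"
  using phase_rel[OF Lf irr stat one pjk dk(2)[of t j] dk(2)[of t k]] t unfolding theta_def by auto

definition cc :: "'a \<Rightarrow> 'a \<Rightarrow> real" where
  "cc j k = (SOME c. AE x in K j k. x = c)"

lemma K_dirac:
  assumes pjk: "p j k > 0"
  shows "AE x in K j k. x = cc j k"
proof -
  have "\<exists>c. AE x in K j k. x = c"
  proof (rule dirac_from_char[OF K_prob K_sets])
    show "0 < min (dk j) (dk k)" using dk(1)[of j] dk(1)[of k] by simp
    fix t :: real assume "0 < t" "t < min (dk j) (dk k)"
    then show "norm (\<integral>x. iexp (t * x) \<partial>K j k) = 1"
      using edge_rel[OF pjk] unfolding psi_def by blast
  qed
  then show ?thesis unfolding cc_def by (rule someI_ex)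
qed

lemma psi_cc:
  assumes pjk: "p j k > 0"
  shows "psi j k t = iexp (t * cc j k)"
proof -
  interpret Kp: prob_space "K j k" by (rule K_prob)
  have [measurable_cong]: "sets (K j k) = sets borel" by (rule K_sets)
  have "psi j k t = (\<integral>x. iexp (t * cc j k) \<partial>K j k)"
    unfolding psi_def using K_dirac[OF pjk] by (intro integral_cong_AE) (auto elim: eventually_mono)
  also have "\<dots> = iexp (t * cc j k)" by (simp add: Kp.prob_space)
  finally show ?thesis .
qed

definition RR :: "'a \<Rightarrow> real \<Rightarrow> bool" where
  "RR k G \<longleftrightarrow> (\<exists>\<delta>>0. \<forall>t. 0 < t \<longrightarrow> t < \<delta> \<longrightarrow>
      theta Lf k t \<noteq> 0 \<and> iexp (t * G) * theta Lf k t = theta Lf undefined t)"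

lemma RR_exists: "\<exists>G. RR k G"
proof -
  obtain n where "pstep p n undefined k > 0" using irr unfolding irreducible_matrix_def by blast
  then show ?thesis
  proof (induction n arbitrary: k)
    case 0
    then have k: "k = undefined" by (auto split: if_splits)
    have "RR k 0" unfolding RR_def k
      by (rule exI[of _ "dk undefined"]) (auto simp: dk(1) intro!: theta_nz dk(2))
    then show ?case by blast
  next
    case (Suc n)
    then obtain m where m: "pstep p n undefined m > 0" "p m k > 0" using pstep_Suc_pos by blast
    obtain G where G: "RR m G" using Suc.IH m(1) by blast
    then obtain \<delta> where \<delta>: "\<delta> > 0" "\<forall>t. 0 < t \<longrightarrow> t < \<delta> \<longrightarrow>
      theta Lf m t \<noteq> 0 \<and> iexp (t * G) * theta Lf m t = theta Lf undefined t" unfolding RR_def by blast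
    have "RR k (G + cc m k)" unfolding RR_def
    proof (intro exI[of _ "min \<delta> (min (dk m) (dk k))"] conjI allI impI)
      show "0 < min \<delta> (min (dk m) (dk k))" using \<delta>(1) dk(1)[of m] dk(1)[of k] by simp
      fix t :: real assume t: "0 < t" "t < min \<delta> (min (dk m) (dk k))"
      show "theta Lf k t \<noteq> 0" using t by (intro theta_nz dk(2)) auto
      have e: "psi m k t * theta Lf k t = theta Lf m t" using edge_rel[OF m(2), of t] t by auto
      have "iexp (t * (G + cc m k)) * theta Lf k t = iexp (t * G) * (iexp (t * cc m k) * theta Lf k t)"
        by (simp add: distrib_left exp_add algebra_simps)
      also have "iexp (t * cc m k) * theta Lf k t = theta Lf m t" using e psi_cc[OF m(2), of t] by simp
      also have "iexp (t * G) * theta Lf m t = theta Lf undefined t" using \<delta>(2) t by auto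
      finally show "iexp (t * (G + cc m k)) * theta Lf k t = theta Lf undefined t" .
    qed
    then show ?case by blast
  qed
qed

lemma RR_unique:
  assumes "RR k G" "RR k G'"
  shows "G = G'"
proof -
  obtain \<delta> where \<delta>: "\<delta> > 0" "\<forall>t. 0 < t \<longrightarrow> t < \<delta> \<longrightarrow>
      theta Lf k t \<noteq> 0 \<and> iexp (t * G) * theta Lf k t = theta Lf undefined t" using assms(1) unfolding RR_def by blast
  obtain \<delta>' where \<delta>': "\<delta>' > 0" "\<forall>t. 0 < t \<longrightarrow> t < \<delta>' \<longrightarrow>
      theta Lf k t \<noteq> 0 \<and> iexp (t * G') * theta Lf k t = theta Lf undefined t" using assms(2) unfolding RR_def by blast
  define t where "t = min (min (\<delta>/2) (\<delta>'/2)) (1 / (\<bar>G - G'\<bar> + 1))"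
  have t0: "0 < t" unfolding t_def using \<delta>(1) \<delta>'(1) by (simp add: add_pos_nonneg)
  have t1: "t < \<delta>" "t < \<delta>'" unfolding t_def using \<delta>(1) \<delta>'(1) by auto
  have "iexp (t * G) * theta Lf k t = iexp (t * G') * theta Lf k t" using \<delta>(2) \<delta>'(2) t0 t1 by auto
  moreover have "theta Lf k t \<noteq> 0" using \<delta>(2) t0 t1 by auto
  ultimately have "iexp (t * G) = iexp (t * G')" by simp
  then have "iexp (t * (G - G')) = 1" by (simp add: right_diff_distrib exp_diff)
  moreover have "t * \<bar>G - G'\<bar> < 2 * pi"
  proof -
    have "t \<le> 1 / (\<bar>G - G'\<bar> + 1)" unfolding t_def by simp
    then have "t * \<bar>G - G'\<bar> \<le> 1 / (\<bar>G - G'\<bar> + 1) * \<bar>G - G'\<bar>"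
      by (rule mult_right_mono) simp
    also have "\<dots> = \<bar>G - G'\<bar> / (\<bar>G - G'\<bar> + 1)" by simp
    also have "\<dots> < 1" by simp
    also have "1 < 2 * pi" using pi_gt3 by simp
    finally show ?thesis .
  qed
  ultimately have "G - G' = 0" by (rule iexp_eq_imp[OF t0, rotated])
  then show ?thesis by simp
qed

definition gg :: "'a \<Rightarrow> real" where "gg k = (SOME G. RR k G)"

lemma RR_gg: "RR k (gg k)"
  unfolding gg_def using RR_exists by (rule someI_ex)

lemma gg_edge:
  assumes pjk: "p j k > 0"
  shows "gg k = gg j + cc j k"
proof -
  obtain \<delta> where \<delta>: "\<delta> > 0" "\<forall>t. 0 < t \<longrightarrow> t < \<delta> \<longrightarrow>
      theta Lf j t \<noteq> 0 \<and> iexp (t * gg j) * theta Lf j t = theta Lf undefined t" using RR_gg[of j] unfolding RR_def by blast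
  have "RR k (gg j + cc j k)" unfolding RR_def
  proof (intro exI[of _ "min \<delta> (min (dk j) (dk k))"] conjI allI impI)
    show "0 < min \<delta> (min (dk j) (dk k))" using \<delta>(1) dk(1)[of j] dk(1)[of k] by simp
    fix t :: real assume t: "0 < t" "t < min \<delta> (min (dk j) (dk k))"
    show "theta Lf k t \<noteq> 0" using t by (intro theta_nz dk(2)) auto
    have e: "psi j k t * theta Lf k t = theta Lf j t" using edge_rel[OF pjk, of t] t by auto
    have "iexp (t * (gg j + cc j k)) * theta Lf k t = iexp (t * gg j) * (iexp (t * cc j k) * theta Lf k t)"
      by (simp add: distrib_left exp_add algebra_simps)
    also have "iexp (t * cc j k) * theta Lf k t = theta Lf j t" using e psi_cc[OF pjk, of t] by simp
    also have "iexp (t * gg j) * theta Lf j t = theta Lf undefined t" using \<delta>(2) t by auto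
    finally show "iexp (t * (gg j + cc j k)) * theta Lf k t = theta Lf undefined t" .
  qed
  then show ?thesis using RR_unique RR_gg by blast
qed

lemma K_AE_gg:
  assumes pjk: "p j k > 0"
  shows "AE x in K j k. x = gg k - gg j"
  using K_dirac[OF pjk] gg_edge[OF pjk] by simp

lemma AE_Pj:
  assumes n: "1 \<le> n"
  shows "AE \<omega> in Pm j. X n \<omega> = gg (M n \<omega>) - gg (M (n - 1) \<omega>)"
proof -
  interpret Pj: prob_space "Pm j" by (rule prob)
  define B where "B l k = (if k = n then {x. x \<noteq> gg (l ! n) - gg (l ! (n - 1))} else UNIV)" for l :: "'a list" and k
  have B: "B l k \<in> sets borel" for l k unfolding B_def by auto
  define E where "E l = {\<omega> \<in> space (Pm j). (\<forall>k\<le>n. M k \<omega> = (\<lambda>k. l ! k) k) \<and> (\<forall>k\<in>{1..n}. X k \<omega> \<in> B l k)}" for l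
  have Enull: "E l \<in> null_sets (Pm j)" for l
  proof -
    have Es: "E l \<in> sets (Pm j)" unfolding E_def by (rule cyl_sets[OF B])
    have fac: "p (l ! (n - 1)) (l ! n) * measure (K (l ! (n - 1)) (l ! n)) (B l n) = 0"
    proof (cases "p (l ! (n - 1)) (l ! n) > 0")
      case True
      interpret Kp: prob_space "K (l ! (n - 1)) (l ! n)" by (rule K_prob)
      have Bs: "B l n \<in> Kp.events" using B[of l n] by (simp add: K_sets)
      have "AE x in K (l ! (n - 1)) (l ! n). x \<notin> B l n"
        using K_AE_gg[OF True] by eventually_elim (simp add: B_def)
      then have "measure (K (l ! (n - 1)) (l ! n)) (B l n) = 0" using Kp.prob_eq_0[OF Bs] by simp
      then show ?thesis by simp
    next
      case False
      then have "p (l ! (n - 1)) (l ! n) = 0" using p_nonneg[of "l ! (n - 1)" "l ! n"] by simp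
      then show ?thesis by simp
    qed
    have pz: "(\<Prod>k\<in>{1..n}. p (l ! (k - 1)) (l ! k) * measure (K (l ! (k - 1)) (l ! k)) (B l k)) = 0"
      by (rule prod_zero, simp, rule bexI[of _ n], rule fac) (use n in simp)
    have "measure (Pm j) (E l) = 0"
      unfolding E_def by (subst cyl_measure[OF B]) (simp only: pz mult_zero_right)
    then show ?thesis using Es by (simp add: null_sets_def Pj.emeasure_eq_measure)
  qed
  have "(\<Union>l\<in>{l :: 'a list. length l = Suc n}. E l) \<in> null_sets (Pm j)"
    by (rule null_sets_UN') (auto intro: countableI_type Enull)
  then show ?thesis
  proof (rule AE_I')
    show "{\<omega> \<in> space (Pm j). \<not> X n \<omega> = gg (M n \<omega>) - gg (M (n - 1) \<omega>)} \<subseteq> (\<Union>l\<in>{l :: 'a list. length l = Suc n}. E l)"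
    proof
      fix \<omega> assume \<omega>: "\<omega> \<in> {\<omega> \<in> space (Pm j). \<not> X n \<omega> = gg (M n \<omega>) - gg (M (n - 1) \<omega>)}"
      define l where "l = map (\<lambda>k. M k \<omega>) [0..<Suc n]"
      have len: "length l = Suc n" unfolding l_def by simp
      have lk: "k \<le> n \<Longrightarrow> l ! k = M k \<omega>" for k unfolding l_def by (simp add: nth_map del: upt_Suc)
      have "\<omega> \<in> E l" unfolding E_def B_def using \<omega> lk n by auto
      then show "\<omega> \<in> (\<Union>l\<in>{l :: 'a list. length l = Suc n}. E l)" using len by blast
    qed
  qed
qed

lemma null_hom: "null_homologous \<pi> Pm M X"
  unfolding null_homologous_def
proof (intro exI[of _ gg] allI impI)
  fix n :: nat assume n: "1 \<le> n"
  define Bad where "Bad = {\<omega> \<in> space (Pm undefined). \<not> X n \<omega> = gg (M n \<omega>) - gg (M (n - 1) \<omega>)}"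
  have Bad_s: "Bad \<in> sets (Pm i)" for i
  proof -
    have "Bad \<in> sets (Pm undefined)" unfolding Bad_def by measurable
    then show ?thesis by (simp add: sets_eq[of i undefined])
  qed
  have Bad0: "emeasure (Pm i) Bad = 0" for i
  proof -
    have "{\<omega> \<in> space (Pm i). \<not> X n \<omega> = gg (M n \<omega>) - gg (M (n - 1) \<omega>)} = Bad"
      unfolding Bad_def by (simp add: space_eq[of i undefined])
    from AE_iff_measurable[OF Bad_s this] AE_Pj[OF n] show ?thesis by simp
  qed
  have spP: "space (Ppi \<pi> Pm) = space (Pm undefined)"
    unfolding Ppi_def by (simp add: space_measure_of_conv)
  have setsP: "sets (Ppi \<pi> Pm) = sets (Pm undefined)"
    unfolding Ppi_def using sets.space_closed[of "Pm undefined"]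
    by (simp add: sets_measure_of_conv sets.sigma_sets_eq)
  have "emeasure (Ppi \<pi> Pm) Bad = 0"
    unfolding Ppi_def emeasure_measure_of_conv by (simp add: Bad0)
  then have "Bad \<in> null_sets (Ppi \<pi> Pm)" using Bad_s[of undefined] setsP by (simp add: null_sets_def)
  then show "AE \<omega> in Ppi \<pi> Pm. X n \<omega> = gg (M n \<omega>) - gg (M (n - 1) \<omega>)"
    by (rule AE_I') (auto simp: Bad_def spP)
qed

end

end




lemma Lam_psum: "Lam Lf (WW M X 0 \<omega>) = Lf (\<lambda>n. ereal (psum X n \<omega>))"
  unfolding Lam_def WW_def psum_def by simp

lemma (in MRWloc) afin_one_from_AE:
  assumes Lf: "LfOK Lf" and ae: "AE \<omega> in Pm i. \<bar>Lf (\<lambda>n. ereal (psum X n \<omega>))\<bar> \<noteq> \<infinity>"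
  shows "afin Lf i = 1"
proof -
  interpret Pi: prob_space "Pm i" by (rule prob)
  have Lm[measurable]: "(Lam Lf :: (nat \<Rightarrow> 'a \<times> real) \<Rightarrow> ereal) \<in> borel_measurable SS" by (rule Lam_meas[OF Lf])
  have s: "{\<omega>\<in>space (Pm i). \<bar>Lam Lf (WW M X 0 \<omega>)\<bar> \<noteq> \<infinity>} \<in> sets (Pm i)" by measurable
  have "AE \<omega> in Pm i. \<bar>Lam Lf (WW M X 0 \<omega>)\<bar> \<noteq> \<infinity>" using ae by (simp add: Lam_psum)
  then show ?thesis unfolding afin_def using Pi.prob_Collect_eq_1[OF s] by simp
qed

theorem lemma5p2:
  fixes p :: "'a::countable \<Rightarrow> 'a \<Rightarrow> real"
    and K :: "'a \<Rightarrow> 'a \<Rightarrow> real measure"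
    and M :: "nat \<Rightarrow> 'b \<Rightarrow> 'a" and X :: "nat \<Rightarrow> 'b \<Rightarrow> real"
    and Pm :: "'a \<Rightarrow> 'b measure" and \<pi> :: "'a \<Rightarrow> real"
  assumes "MRW p K M X Pm"
    and "irreducible_matrix p"
    and "positive_recurrent M Pm"
    and "stationary_distribution p \<pi>"
    and "\<exists>i. (AE \<omega> in Pm i. \<bar>liminf (\<lambda>n. ereal (psum X n \<omega>))\<bar> \<noteq> \<infinity>)
           \<or> (AE \<omega> in Pm i. \<bar>limsup (\<lambda>n. ereal (psum X n \<omega>))\<bar> \<noteq> \<infinity>)"
  shows "null_homologous \<pi> Pm M X"
proof -
  interpret MRWloc p K M X Pm by unfold_locales (rule assms(1))
  obtain i where i: "(AE \<omega> in Pm i. \<bar>liminf (\<lambda>n. ereal (psum X n \<omega>))\<bar> \<noteq> \<infinity>)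
           \<or> (AE \<omega> in Pm i. \<bar>limsup (\<lambda>n. ereal (psum X n \<omega>))\<bar> \<noteq> \<infinity>)" using assms(5) by blast
  then obtain Lf where Lf: "LfOK Lf" and ae: "AE \<omega> in Pm i. \<bar>Lf (\<lambda>n. ereal (psum X n \<omega>))\<bar> \<noteq> \<infinity>"
    using LfOK_liminf LfOK_limsup by blast
  have "afin Lf i = 1" by (rule afin_one_from_AE[OF Lf ae])
  then have one: "\<And>k. afin Lf k = 1" by (rule afin_all_one[OF Lf assms(2)])
  show ?thesis by (rule null_hom[OF Lf assms(2) assms(4) one])
qed


end
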